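(* Let $(\Gamma,\mathcal M)$ be a linear matrix problem with $\Gamma\subset k^{t\times t}$, and let the free and dependent positions and the coefficients $c^{(l,r)}_{ij}$ be as in the context. Then for every step-sequence $\underline n$, the space $\mathcal M_{\underline n\times\underline n}$ consists of all $\underline n\times\underline n$ matrices $[M_{ij}]_{i,j=1}^t$ whose free blocks are arbitrary and whose dependent blocks are given by $M_{lr}=\sum_{(i,j)\in\mathcal N_f}c^{(l,r)}_{ij}M_{ij}$ for $(l,r)\in\mathcal N_d$. Moreover, when Belitskiĭ's algorithm is applied to $M\in\mathcal M_{\underline n\times\underline n}$ with $\Lambda=\Gamma_{\underline n\times\underline n}$, at each step the block that is reduced (the first non-stable block of the current partition) is a subblock of a free block $M_{ij}$, $(i,j)\in\mathcal N_f$, of $M$.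
   Context: Throughout, $k$ is an algebraically closed field with a fixed linear order $\prec$. For $\underline n=(n_1,\dots,n_t)$, an $\underline n\times\underline n$ matrix is $M=[M_{ij}]$ with $M_{ij}\in k^{n_i\times n_j}$. A reduced $\underline n\times\underline n$ algebra is an algebra $\Lambda$ of $\underline n\times\underline n$ matrices for which there are an equivalence relation $\sim$ on $\{1,\dots,t\}$ and, for each pair of classes $(\mathcal I,\mathcal J)$, a system $\sum_{\mathcal I\ni i<j\in\mathcal J}c^{(l)}_{ij}x_{ij}=0$, such that $\Lambda$ is exactly the set of upper block-triangular $S$ with $S_{ii}=S_{jj}$ for $i\sim j$ and $\sum c^{(l)}_{ij}S_{ij}=0$. $\Lambda^*$: invertible elements. Weyr matrices: $W=W_{\{\lambda_1\}}\oplus\dots\oplus W_{\{\lambda_r\}}$, $\lambda_1\prec\dots\prec\lambda_r$, $W_{\{\lambda_i\}}$ block upper triangular with diagonal blocks $\lambda_iI_{m_{i1}},\dots,\lambda_iI_{m_{ik_i}}$ ($m_{i1}\ge\dots\ge m_{ik_i}\ge1$), superdiagonal blocks $\begin{bmatrix}I\\0\end{bmatrix}$, other blocks $0$; standard partition: for $W_{\{\lambda_i\}}$, block sizes $m_{i1}-m_{i2},\dots,m_{ik_i};\ m_{i2}-m_{i3},\dots,m_{ik_i};\dots;m_{ik_i}$ with zeros removed. Belitskiĭ's algorithm for $(M,\Lambda)$: a block $M_{ij}$ is stable if $(S^{-1}MS)_{ij}=M_{ij}$ for all $S\in\Lambda^*$ (then $M_{ij}=a_{ij}I$ if $i\sim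 j$, $M_{ij}=0=:a_{ij}$ otherwise). If all blocks are stable, stop. Else order blocks $M_{t1}<\dots<M_{tt}<M_{t-1,1}<\dots<M_{1t}$, take the first non-stable block $M_{lr}$ (this is the block reduced at this step), with classes $\mathcal I\ni l,\mathcal J\ni r$, and let $( * )$ be $a_{l1}S_{1r}+\dots+a_{l,r-1}S_{r-1,r}=S_{l,l+1}a_{l+1,r}+\dots+S_{lt}a_{tr}$. Case I ($( * )$ not implied by the equations of $\Lambda$ for $(\mathcal I,\mathcal J)$): $M'=S^{-1}MS$, $S\in\Lambda^*$ with identity diagonal blocks, $M'_{lr}=0$; partition unchanged. Case II ($( * )$ implied, $l\not\sim r$): $M'=S^{-1}MS$ with $M'_{lr}=\begin{bmatrix}0&I\\0&0\end{bmatrix}$; strips equivalent to $l$ (resp. $r$) subdivided conformally with the rows (resp. columns) of this block. Case III ($( * )$ implied, $l\sim r$): $M'=S^{-1}MS$ with $M'_{lr}$ a Weyr matrix; strips equivalent to $l$ subdivided by its standard partition. Then $\Lambda'=\{S\in\Lambda\mid(SM')_{lr}=(M'S)_{lr}\}$ (reduced for the refined partition); repeat with $(M',\Lambda')$ until all blocks are stable. Linear matrix problems. A basic matrix algebra is a subalgebra $\Gamma\subset k^{t\times t}$ (with $I_t$) of upper triangular matrices containing the diagonal part of each of its elements; it is a reduced $(1,\dots,1)\times(1,\dots,1)$ algebra with an equivalence relation $\sim$ and equations. A linear matrix problem is a pair $(\Gamma,\mathcal M)$, $\mathcal M\subset k^{t\times t}$ a subspace with $\Gamma\mathcal M,\mathcal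 M\Gamma\subset\mathcal M$; $\mathcal M$ is the set of all $[m_{ij}]$ satisfying a linear system whose equations each involve only unknowns $x_{ij}$ with $(i,j)\in\mathcal I\times\mathcal J$ for one pair of classes. A step-sequence is $\underline n$ with $n_i=n_j$ for $i\sim j$; $\Gamma_{\underline n\times\underline n}$ is the reduced $\underline n\times\underline n$ algebra with the same $\sim$ and equations as $\Gamma$; $\mathcal M_{\underline n\times\underline n}$ is the space of $\underline n\times\underline n$ matrices whose blocks satisfy the system defining $\mathcal M$ (with blocks $M_{ij}$ in place of $x_{ij}$). Free and dependent blocks. Order the unknowns as $x_{t1}\lhd x_{t2}\lhd\dots\lhd x_{tt}\lhd x_{t-1,1}\lhd\dots\lhd x_{t-1,t}\lhd\dots\lhd x_{1t}$. Gauss–Jordan elimination of the system defining $\mathcal M$, eliminating starting with the $\lhd$-last unknown, brings it to the form $x_{lr}=\sum_{(i,j)\in\mathcal N_f}c^{(l,r)}_{ij}x_{ij}$, $(l,r)\in\mathcal N_d$, where $\mathcal N_d\cup\mathcal N_f=\{1,\dots,t\}^2$, $\mathcal N_d\cap\mathcal N_f=\varnothing$, and $c^{(l,r)}_{ij}\ne0$ implies $i\sim l$, $j\sim r$ and $x_{ij}\lhd x_{lr}$. A block $M_{ij}$ of an $\underline n\times\underline n$ matrix is free if $(i,j)\in\mathcal N_f$ and dependent if $(i,j)\in\mathcal N_d$. *)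

theory Defs
  imports "Jordan_Normal_Form.Matrix" "HOL-Computational_Algebra.Polynomial"
begin

text \<open>The field k is algebraically closed; its fixed linear order is the type-class order.\<close>
definition alg_closed :: "('a::field) itself \<Rightarrow> bool" where
  "alg_closed _ \<longleftrightarrow> (\<forall>p :: 'a poly. degree p \<ge> 1 \<longrightarrow> (\<exists>x. poly p x = 0))"

section \<open>Block structure of matrices (0-based strip indices)\<close>

definition off :: "nat list \<Rightarrow> nat \<Rightarrow> nat" where
  "off ns i = sum_list (take i ns)"

definition blk :: "nat list \<Rightarrow> 'a mat \<Rightarrow> nat \<Rightarrow> nat \<Rightarrow> 'a mat" where
  "blk ns M i j = mat (ns ! i) (ns ! j) (\<lambda>(p, q). M $$ (off ns i + p, off ns j + q))"

definition bent :: "nat list \<Rightarrow> 'a::zero mat \<Rightarrow> nat \<Rightarrow> nat \<Rightarrow> nat \<Rightarrow> nat \<Rightarrow> 'a" where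
  "bent ns M i j p q = (if p < ns ! i \<and> q < ns ! j then M $$ (off ns i + p, off ns j + q) else 0)"

definition one_class_pair :: "(nat \<times> nat) set \<Rightarrow> nat \<Rightarrow> (nat \<Rightarrow> nat \<Rightarrow> 'a::zero) \<Rightarrow> bool" where
  "one_class_pair E t c \<longleftrightarrow> (\<exists>i0 j0. \<forall>i j. c i j \<noteq> 0 \<longrightarrow>
      i < t \<and> j < t \<and> (i0, i) \<in> E \<and> (j0, j) \<in> E)"

definition blk_sol :: "nat list \<Rightarrow> (nat \<Rightarrow> nat \<Rightarrow> 'a::comm_ring_1) set \<Rightarrow> 'a mat \<Rightarrow> bool" where
  "blk_sol ns eqs S \<longleftrightarrow> (\<forall>c\<in>eqs. \<forall>p q.
      (\<Sum>i<length ns. \<Sum>j<length ns. c i j * bent ns S i j p q) = 0)"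

definition red_alg :: "nat list \<Rightarrow> (nat \<times> nat) set \<Rightarrow> (nat \<Rightarrow> nat \<Rightarrow> 'a::comm_ring_1) set \<Rightarrow> 'a mat set" where
  "red_alg ns E eqs = {S \<in> carrier_mat (sum_list ns) (sum_list ns).
      (\<forall>i j. j < i \<and> i < length ns \<longrightarrow> blk ns S i j = 0\<^sub>m (ns ! i) (ns ! j)) \<and>
      (\<forall>(i, j)\<in>E. blk ns S i i = blk ns S j j) \<and>
      blk_sol ns eqs S}"

definition Mnn :: "nat list \<Rightarrow> (nat \<Rightarrow> nat \<Rightarrow> 'a::comm_ring_1) set \<Rightarrow> 'a mat set" where
  "Mnn ns eqs = {M \<in> carrier_mat (sum_list ns) (sum_list ns). blk_sol ns eqs M}"

definition step_seq :: "nat \<Rightarrow> (nat \<times> nat) set \<Rightarrow> nat list \<Rightarrow> bool" where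
  "step_seq t E ns \<longleftrightarrow> length ns = t \<and> (\<forall>(i, j)\<in>E. ns ! i = ns ! j)"

definition unk_less :: "nat \<times> nat \<Rightarrow> nat \<times> nat \<Rightarrow> bool" where
  "unk_less x y \<longleftrightarrow> fst x > fst y \<or> (fst x = fst y \<and> snd x < snd y)"

fun locate :: "nat list \<Rightarrow> nat \<Rightarrow> nat \<times> nat" where
  "locate [] p = (0, p)"
| "locate (m # ms) p = (if p < m then (0, p) else (let (j, d) = locate ms (p - m) in (Suc j, d)))"

text \<open>W_{lambda}: diagonal blocks lambda I_{m_1},...,lambda I_{m_k}, superdiagonal blocks [I;0].\<close>
definition weyr_block :: "'a::{zero,one} \<Rightarrow> nat list \<Rightarrow> 'a mat" where
  "weyr_block lam ms = mat (sum_list ms) (sum_list ms) (\<lambda>(p, q).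
     (let (a, p') = locate ms p; (b, q') = locate ms q in
      if p' = q' \<and> a = b then lam else if p' = q' \<and> b = Suc a then 1 else 0))"

definition weyr_mat :: "('a::{zero,one} \<times> nat list) list \<Rightarrow> 'a mat" where
  "weyr_mat ws = (let sz = map (\<lambda>w. sum_list (snd w)) ws in
     mat (sum_list sz) (sum_list sz) (\<lambda>(p, q).
       (let (a, p') = locate sz p; (b, q') = locate sz q in
        if a = b then weyr_block (fst (ws ! a)) (snd (ws ! a)) $$ (p', q') else 0)))"

definition weyr_data :: "('a::linorder \<times> nat list) list \<Rightarrow> bool" where
  "weyr_data ws \<longleftrightarrow> sorted_wrt (<) (map fst ws) \<and>
     (\<forall>w\<in>set ws. snd w \<noteq> [] \<and> sorted_wrt (\<ge>) (snd w) \<and> 0 \<notin> set (snd w))"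

text \<open>Standard partition: for each W_{lambda} with m_1 >= ... >= m_k, the j-th diagonal block
  is split into m_j - m_{j+1}, ..., m_{k-1} - m_k, m_k; zeros removed.\<close>
definition std_part_block :: "nat list \<Rightarrow> nat list" where
  "std_part_block ms = filter (\<lambda>x. x \<noteq> 0) (concat (map (\<lambda>j.
      map (\<lambda>i. ms ! i - (if Suc i < length ms then ms ! Suc i else 0)) [j..<length ms])
      [0..<length ms]))"

definition std_part :: "('a \<times> nat list) list \<Rightarrow> nat list" where
  "std_part ws = concat (map (\<lambda>w. std_part_block (snd w)) ws)"

text \<open>State: (strip sizes, the algebra Lambda as a set of matrices, the matrix M).\<close>

definition stable :: "nat list \<Rightarrow> 'a::field mat set \<Rightarrow> 'a mat \<Rightarrow> nat \<Rightarrow> nat \<Rightarrow> bool" where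
  "stable ns L M i j \<longleftrightarrow> (\<forall>S\<in>L. \<forall>M'\<in>carrier_mat (sum_list ns) (sum_list ns).
      invertible_mat S \<and> S * M' = M * S \<longrightarrow> blk ns M' i j = blk ns M i j)"

definition block_order :: "nat \<Rightarrow> (nat \<times> nat) list" where
  "block_order t = concat (map (\<lambda>i. map (\<lambda>j. (i, j)) [0..<t]) (rev [0..<t]))"

definition first_nonstable :: "nat list \<Rightarrow> 'a::field mat set \<Rightarrow> 'a mat \<Rightarrow> (nat \<times> nat) option" where
  "first_nonstable ns L M = find (\<lambda>(i, j). \<not> stable ns L M i j) (block_order (length ns))"

definition strip_eqv :: "nat list \<Rightarrow> 'a mat set \<Rightarrow> nat \<Rightarrow> nat \<Rightarrow> bool" where
  "strip_eqv ns L i j \<longleftrightarrow> i < length ns \<and> j < length ns \<and> ns ! i = ns ! j \<and>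
      (\<forall>S\<in>L. blk ns S i i = blk ns S j j)"

text \<open>Equation (*) for S, with the stable blocks M_{li} = a_{li} I (or 0) written as blocks:
  M_{l1} S_{1r} + ... + M_{l,r-1} S_{r-1,r} = S_{l,l+1} M_{l+1,r} + ... + S_{lt} M_{tr}.\<close>
definition star_eq :: "nat list \<Rightarrow> 'a::field mat \<Rightarrow> nat \<Rightarrow> nat \<Rightarrow> 'a mat \<Rightarrow> bool" where
  "star_eq ns M l r S \<longleftrightarrow> (\<forall>p < ns ! l. \<forall>q < ns ! r.
      (\<Sum>i<r. (blk ns M l i * blk ns S i r) $$ (p, q)) =
      (\<Sum>j\<in>{l<..<length ns}. (blk ns S l j * blk ns M j r) $$ (p, q)))"

text \<open>(*) is implied by the equations of L (for the relevant pair of classes).\<close>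
definition star_implied :: "nat list \<Rightarrow> 'a::field mat set \<Rightarrow> 'a mat \<Rightarrow> nat \<Rightarrow> nat \<Rightarrow> bool" where
  "star_implied ns L M l r \<longleftrightarrow> (\<forall>S\<in>L. star_eq ns M l r S)"

text \<open>The m x n matrix [0 I; 0 0] with I of size rho.\<close>
definition zi_mat :: "nat \<Rightarrow> nat \<Rightarrow> nat \<Rightarrow> 'a::{zero,one} mat" where
  "zi_mat m n rho = mat m n (\<lambda>(p, q). if p < rho \<and> q = n - rho + p then 1 else 0)"

definition refine :: "nat list \<Rightarrow> (nat \<Rightarrow> nat list) \<Rightarrow> nat list" where
  "refine ns parts = concat (map parts [0..<length ns])"

inductive bel_step :: "nat list \<times> 'a::{field,linorder} mat set \<times> 'a mat
    \<Rightarrow> nat list \<times> 'a mat set \<times> 'a mat \<Rightarrow> bool" where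
  case_I:
  "\<lbrakk> first_nonstable ns L M = Some (l, r);
     \<not> star_implied ns L M l r;
     S \<in> L; invertible_mat S; M' \<in> carrier_mat (sum_list ns) (sum_list ns); S * M' = M * S;
     \<forall>i < length ns. blk ns S i i = 1\<^sub>m (ns ! i);
     blk ns M' l r = 0\<^sub>m (ns ! l) (ns ! r);
     L' = {T \<in> L. blk ns (T * M') l r = blk ns (M' * T) l r} \<rbrakk>
   \<Longrightarrow> bel_step (ns, L, M) (ns, L', M')"
| case_II:
  "\<lbrakk> first_nonstable ns L M = Some (l, r);
     star_implied ns L M l r; \<not> strip_eqv ns L l r;
     S \<in> L; invertible_mat S; M' \<in> carrier_mat (sum_list ns) (sum_list ns); S * M' = M * S;
     rho \<le> ns ! l; rho \<le> ns ! r;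
     blk ns M' l r = zi_mat (ns ! l) (ns ! r) rho;
     ns' = refine ns (\<lambda>i. if strip_eqv ns L l i then filter (\<lambda>x. x \<noteq> 0) [rho, ns ! l - rho]
                         else if strip_eqv ns L r i then filter (\<lambda>x. x \<noteq> 0) [ns ! r - rho, rho]
                         else [ns ! i]);
     L' = {T \<in> L. blk ns (T * M') l r = blk ns (M' * T) l r} \<rbrakk>
   \<Longrightarrow> bel_step (ns, L, M) (ns', L', M')"
| case_III:
  "\<lbrakk> first_nonstable ns L M = Some (l, r);
     star_implied ns L M l r; strip_eqv ns L l r;
     S \<in> L; invertible_mat S; M' \<in> carrier_mat (sum_list ns) (sum_list ns); S * M' = M * S;
     weyr_data ws; blk ns M' l r = weyr_mat ws;
     ns' = refine ns (\<lambda>i. if strip_eqv ns L l i then std_part ws else [ns ! i]);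
     L' = {T \<in> L. blk ns (T * M') l r = blk ns (M' * T) l r} \<rbrakk>
   \<Longrightarrow> bel_step (ns, L, M) (ns', L', M')"

end

theory Submission
  imports Defs "Jordan_Normal_Form.Determinant"
begin


lemma sum_list_take_eq: "i \<le> length xs \<Longrightarrow> sum_list (take i xs) = (\<Sum>k<i. xs ! k)"
proof (induction xs arbitrary: i)
  case Nil then show ?case by simp
next
  case (Cons x xs)
  then show ?case
  proof (cases i)
    case 0 then show ?thesis by simp
  next
    case (Suc i')
    with Cons show ?thesis by (simp del: sum.lessThan_Suc add: sum.lessThan_Suc_shift)
  qed
qed

lemma off_eq: "i \<le> length ns \<Longrightarrow> off ns i = (\<Sum>k<i. ns ! k)"
  unfolding off_def by (rule sum_list_take_eq)

lemma sum_list_nth_eq: "sum_list xs = (\<Sum>k<length xs. xs ! k)"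
  using sum_list_take_eq[of "length xs" xs] by simp

lemma off_le: "i < length ns \<Longrightarrow> off ns i + ns ! i \<le> sum_list ns"
proof -
  assume i: "i < length ns"
  have "off ns i + ns ! i = (\<Sum>k<Suc i. ns ! k)" using i by (simp add: off_eq)
  also have "\<dots> \<le> (\<Sum>k<length ns. ns ! k)" by (rule sum_mono2) (use i in auto)
  finally show ?thesis by (simp add: sum_list_nth_eq)
qed

lemma sum_add_split: "(\<Sum>x<(a::nat)+(b::nat). g x) = (\<Sum>x<a. g x) + (\<Sum>s<b. g (a+s))"
  by (induct b) (auto simp: add.assoc)

lemma sum_split_blocks: "(\<Sum>x<(\<Sum>k<(t::nat). (f k::nat)). g x) = (\<Sum>k<t. \<Sum>s<f k. g ((\<Sum>i<k. f i) + s))"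
  by (induct t) (auto simp: sum_add_split)

lemma decomp: "(x::nat) < (\<Sum>k<(t::nat). f k) \<Longrightarrow> \<exists>i<t. (\<Sum>k<i. f k) \<le> x \<and> x < (\<Sum>k<i. f k) + f i"
proof (induct t)
  case 0 then show ?case by simp
next
  case (Suc t)
  show ?case
  proof (cases "x < (\<Sum>k<t. f k)")
    case True with Suc show ?thesis by (meson less_SucI)
  next
    case False with Suc show ?thesis by auto
  qed
qed

lemma off_rep: "i \<le> t \<Longrightarrow> off (replicate t (1::nat)) i = i"
  unfolding off_def by (simp add: sum_list_replicate)

lemma bent_rep: "i < t \<Longrightarrow> j < t \<Longrightarrow>
   bent (replicate t 1) m i j p q = (if p = 0 \<and> q = 0 then m $$ (i,j) else 0)"
  unfolding bent_def off_def by (auto simp: sum_list_replicate less_imp_le)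

lemmas bent_rep' = bent_rep[simplified]

lemma blk_zero_iff: "blk ns X i j = 0\<^sub>m (ns!i) (ns!j) \<longleftrightarrow> (\<forall>p q. bent ns X i j p q = 0)"
  unfolding blk_def bent_def
  by (auto simp: mat_eq_iff)

lemma blk_eq_iff: "ns!i = ns!j \<Longrightarrow> ns!i' = ns!j' \<Longrightarrow>
   blk ns X i i' = blk ns Y j j' \<longleftrightarrow> (\<forall>p q. bent ns X i i' p q = bent ns Y j j' p q)"
  unfolding blk_def bent_def
  by (auto simp: mat_eq_iff)



definition sl :: "nat list \<Rightarrow> 'a::zero mat \<Rightarrow> nat \<Rightarrow> nat \<Rightarrow> 'a mat" where
  "sl ns M p q = mat (length ns) (length ns) (\<lambda>(i,j). bent ns M i j p q)"

definition ssol :: "nat \<Rightarrow> (nat \<Rightarrow> nat \<Rightarrow> 'a::comm_ring_1) set \<Rightarrow> 'a mat \<Rightarrow> bool" where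
  "ssol t eqs m \<longleftrightarrow> (\<forall>c\<in>eqs. (\<Sum>i<t. \<Sum>j<t. c i j * m $$ (i,j)) = 0)"

lemma sl_index[simp]: "i < length ns \<Longrightarrow> j < length ns \<Longrightarrow> sl ns M p q $$ (i,j) = bent ns M i j p q"
  "sl ns M p q \<in> carrier_mat (length ns) (length ns)"
  "dim_row (sl ns M p q) = length ns" "dim_col (sl ns M p q) = length ns"
  unfolding sl_def by auto

lemma blk_sol_rep: "blk_sol (replicate t 1) eqs m \<longleftrightarrow> ssol t eqs m"
proof -
  have *: "(\<Sum>i<t. \<Sum>j<t. cc i j * bent (replicate t 1) m i j p q) =
     (if p = 0 \<and> q = 0 then (\<Sum>i<t. \<Sum>j<t. cc i j * m $$ (i,j)) else 0)" for cc p q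
    by (auto simp: bent_rep bent_rep' intro!: sum.neutral sum.cong)
  show ?thesis unfolding blk_sol_def ssol_def length_replicate * by auto
qed

lemmas blk_sol_rep' = blk_sol_rep[simplified]

lemma blk_sol_sl: "blk_sol ns eqs M \<longleftrightarrow> (\<forall>p q. ssol (length ns) eqs (sl ns M p q))"
proof -
  have "(\<Sum>i<length ns. \<Sum>j<length ns. cc i j * sl ns M p q $$ (i,j)) =
        (\<Sum>i<length ns. \<Sum>j<length ns. cc i j * bent ns M i j p q)" for cc p q
    by (auto intro!: sum.cong)
  then show ?thesis unfolding blk_sol_def ssol_def by auto
qed

lemma red_alg_rep:
  assumes E: "E \<subseteq> {0..<t} \<times> {0..<t}"
  shows "m \<in> red_alg (replicate t 1) E eqs \<longleftrightarrow> m \<in> carrier_mat t t \<and>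
     (\<forall>i j. j < i \<and> i < t \<longrightarrow> m $$ (i,j) = 0) \<and> (\<forall>(i,j)\<in>E. m $$ (i,i) = m $$ (j,j)) \<and> ssol t eqs m"
proof -
  have z: "blk (replicate t 1) m i j = 0\<^sub>m (replicate t 1 ! i) (replicate t 1 ! j) \<longleftrightarrow> m $$ (i,j) = 0"
    if "i < t" "j < t" for i j
    unfolding blk_zero_iff using that by (auto simp: bent_rep bent_rep')
  have e: "blk (replicate t 1) m i i = blk (replicate t 1) m j j \<longleftrightarrow> m $$ (i,i) = m $$ (j,j)"
    if "i < t" "j < t" for i j
    using that by (subst blk_eq_iff) (auto simp: bent_rep bent_rep')
  have "(\<forall>(i,j)\<in>E. blk (replicate t 1) m i i = blk (replicate t 1) m j j) \<longleftrightarrow>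
        (\<forall>(i,j)\<in>E. m $$ (i,i) = m $$ (j,j))"
  proof
    assume H: "\<forall>(i,j)\<in>E. blk (replicate t 1) m i i = blk (replicate t 1) m j j"
    show "\<forall>(i,j)\<in>E. m $$ (i,i) = m $$ (j,j)"
    proof clarify
      fix i j assume ij: "(i,j) \<in> E"
      then have "i < t" "j < t" using E by auto
      then show "m $$ (i,i) = m $$ (j,j)" using H ij e by auto
    qed
  next
    assume H: "\<forall>(i,j)\<in>E. m $$ (i,i) = m $$ (j,j)"
    show "\<forall>(i,j)\<in>E. blk (replicate t 1) m i i = blk (replicate t 1) m j j"
    proof clarify
      fix i j assume ij: "(i,j) \<in> E"
      then have "i < t" "j < t" using E by auto
      then show "blk (replicate t 1) m i i = blk (replicate t 1) m j j" using H ij e by auto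
    qed
  qed
  moreover have "(\<forall>i j. j < i \<and> i < length (replicate t (1::nat)) \<longrightarrow>
      blk (replicate t 1) m i j = 0\<^sub>m (replicate t 1 ! i) (replicate t 1 ! j)) \<longleftrightarrow>
     (\<forall>i j. j < i \<and> i < t \<longrightarrow> m $$ (i,j) = 0)"
    using z by auto
  ultimately show ?thesis
    unfolding red_alg_def by (auto simp: blk_sol_rep blk_sol_rep' sum_list_replicate)
qed

lemma Mnn_rep: "m \<in> Mnn (replicate t 1) eqs \<longleftrightarrow> m \<in> carrier_mat t t \<and> ssol t eqs m"
  unfolding Mnn_def using blk_sol_rep[of t eqs m] by (auto simp: sum_list_replicate)

lemma Mnn_sl: "M \<in> Mnn ns eqs \<longleftrightarrow> M \<in> carrier_mat (sum_list ns) (sum_list ns) \<and>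
   (\<forall>p q. sl ns M p q \<in> Mnn (replicate (length ns) 1) eqs)"
  unfolding Mnn_rep by (auto simp: Mnn_def blk_sol_sl)

lemma red_alg_sl:
  assumes E: "E \<subseteq> {0..<length ns} \<times> {0..<length ns}" and st: "\<forall>(i,j)\<in>E. ns ! i = ns ! j"
  shows "M \<in> red_alg ns E eqs \<longleftrightarrow> M \<in> carrier_mat (sum_list ns) (sum_list ns) \<and>
     (\<forall>p q. sl ns M p q \<in> red_alg (replicate (length ns) 1) E eqs)"
proof -
  have a: "(\<forall>i j. j < i \<and> i < length ns \<longrightarrow> blk ns M i j = 0\<^sub>m (ns ! i) (ns ! j)) \<longleftrightarrow>
     (\<forall>p q. \<forall>i j. j < i \<and> i < length ns \<longrightarrow> bent ns M i j p q = 0)"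
    by (auto simp: blk_zero_iff)
  have b: "(\<forall>(i,j)\<in>E. blk ns M i i = blk ns M j j) \<longleftrightarrow>
     (\<forall>p q. \<forall>(i,j)\<in>E. bent ns M i i p q = bent ns M j j p q)"
  proof -
    have "(\<forall>(i,j)\<in>E. blk ns M i i = blk ns M j j) \<longleftrightarrow>
       (\<forall>(i,j)\<in>E. \<forall>p q. bent ns M i i p q = bent ns M j j p q)"
    proof -
      have "\<And>i j. (i,j)\<in>E \<Longrightarrow> (blk ns M i i = blk ns M j j) \<longleftrightarrow>
         (\<forall>p q. bent ns M i i p q = bent ns M j j p q)"
        using st by (intro blk_eq_iff) auto
      then show ?thesis by blast
    qed
    also have "\<dots> \<longleftrightarrow> (\<forall>p q. \<forall>(i,j)\<in>E. bent ns M i i p q = bent ns M j j p q)"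
      by fastforce
    finally show ?thesis .
  qed
  show ?thesis
  proof -
    have c: "sl ns M p q \<in> red_alg (replicate (length ns) 1) E eqs \<longleftrightarrow>
       (\<forall>i j. j < i \<and> i < length ns \<longrightarrow> bent ns M i j p q = 0) \<and>
       (\<forall>(i,j)\<in>E. bent ns M i i p q = bent ns M j j p q) \<and> ssol (length ns) eqs (sl ns M p q)" for p q
    proof -
      have h: "\<forall>(i,j)\<in>E. sl ns M p q $$ (i,i) = bent ns M i i p q \<and> sl ns M p q $$ (j,j) = bent ns M j j p q"
        using E by auto
      have "(\<forall>(i,j)\<in>E. sl ns M p q $$ (i,i) = sl ns M p q $$ (j,j)) \<longleftrightarrow>
            (\<forall>(i,j)\<in>E. bent ns M i i p q = bent ns M j j p q)"
      proof
        assume H: "\<forall>(i,j)\<in>E. sl ns M p q $$ (i,i) = sl ns M p q $$ (j,j)"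
        show "\<forall>(i,j)\<in>E. bent ns M i i p q = bent ns M j j p q"
        proof clarify
          fix i j assume "(i,j) \<in> E" then show "bent ns M i i p q = bent ns M j j p q" using H h by fastforce
        qed
      next
        assume H: "\<forall>(i,j)\<in>E. bent ns M i i p q = bent ns M j j p q"
        show "\<forall>(i,j)\<in>E. sl ns M p q $$ (i,i) = sl ns M p q $$ (j,j)"
        proof clarify
          fix i j assume "(i,j) \<in> E" then show "sl ns M p q $$ (i,i) = sl ns M p q $$ (j,j)" using H h by fastforce
        qed
      qed
      then show ?thesis unfolding red_alg_rep[OF E] by auto
    qed
    show ?thesis
      apply (simp only: c)
      apply (simp only: red_alg_def mem_Collect_eq)
      apply (simp only: a b blk_sol_sl)
      by (simp add: all_conj_distrib)
  qed
qed

lemma bent_mult: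
  assumes A: "A \<in> carrier_mat (sum_list ns) (sum_list ns)" and B: "B \<in> carrier_mat (sum_list ns) (sum_list ns)"
    and i: "i < length ns" and j: "j < length ns"
  shows "bent ns (A * B) i j p q =
     (\<Sum>s<sum_list ns. \<Sum>k<length ns. bent ns A i k p s * bent ns B k j s q)"
proof (cases "p < ns ! i \<and> q < ns ! j")
  case True
  define n where "n = sum_list ns"
  define t where "t = length ns"
  have x: "off ns i + p < n" using off_le[OF i] True unfolding n_def by linarith
  have y: "off ns j + q < n" using off_le[OF j] True unfolding n_def by linarith
  define g where "g z = A $$ (off ns i + p, z) * B $$ (z, off ns j + q)" for z
  have "bent ns (A * B) i j p q = (A * B) $$ (off ns i + p, off ns j + q)"
    unfolding bent_def using True by simp
  also have "\<dots> = (\<Sum>z<n. g z)"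
    using A B x y unfolding g_def n_def by (auto simp: scalar_prod_def atLeast0LessThan intro!: sum.cong)
  also have "n = (\<Sum>k<t. ns ! k)" unfolding n_def t_def by (rule sum_list_nth_eq)
  also have "(\<Sum>z<(\<Sum>k<t. ns ! k). g z) = (\<Sum>k<t. \<Sum>s<ns ! k. g ((\<Sum>i<k. ns ! i) + s))"
    by (rule sum_split_blocks)
  also have "\<dots> = (\<Sum>k<t. \<Sum>s<ns ! k. bent ns A i k p s * bent ns B k j s q)"
  proof (rule sum.cong[OF refl], rule sum.cong[OF refl])
    fix k s assume k: "k \<in> {..<t}" and s: "s \<in> {..<ns ! k}"
    then have "(\<Sum>i<k. ns ! i) = off ns k" unfolding t_def by (simp add: off_eq)
    then show "g ((\<Sum>i<k. ns ! i) + s) = bent ns A i k p s * bent ns B k j s q"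
      using True k s unfolding g_def bent_def by simp
  qed
  also have "\<dots> = (\<Sum>k<t. \<Sum>s<n. bent ns A i k p s * bent ns B k j s q)"
  proof (rule sum.cong[OF refl])
    fix k assume k: "k \<in> {..<t}"
    have "ns ! k \<le> n" using off_le[of k ns] k unfolding n_def t_def by simp
    then show "(\<Sum>s<ns ! k. bent ns A i k p s * bent ns B k j s q) =
               (\<Sum>s<n. bent ns A i k p s * bent ns B k j s q)"
      by (intro sum.mono_neutral_left) (auto simp: bent_def)
  qed
  also have "\<dots> = (\<Sum>s<n. \<Sum>k<t. bent ns A i k p s * bent ns B k j s q)"
    by (rule sum.swap)
  finally show ?thesis unfolding n_def t_def .
next
  case False
  then show ?thesis unfolding bent_def by (auto intro!: sum.neutral)
qed

lemma sl_mult: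
  assumes A: "A \<in> carrier_mat (sum_list ns) (sum_list ns)" and B: "B \<in> carrier_mat (sum_list ns) (sum_list ns)"
  shows "sl ns (A * B) p q = mat (length ns) (length ns)
            (\<lambda>(i,j). \<Sum>s<sum_list ns. (sl ns A p s * sl ns B s q) $$ (i,j))"
  by (rule eq_matI) (auto simp: bent_mult[OF A B] scalar_prod_def atLeast0LessThan intro!: sum.cong)

lemma sum_closed:
  assumes R: "R \<subseteq> carrier_mat t t" and z: "0\<^sub>m t t \<in> R" and add: "\<And>X Y. X \<in> R \<Longrightarrow> Y \<in> R \<Longrightarrow> X + Y \<in> R"
    and X: "\<And>s. s < (K::nat) \<Longrightarrow> X s \<in> R"
  shows "mat t t (\<lambda>(i,j). \<Sum>s<K. X s $$ (i,j)) \<in> R"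
  using X
proof (induct K)
  case 0
  have "mat t t (\<lambda>(i,j). \<Sum>s<0. X s $$ (i,j)) = 0\<^sub>m t t" by (rule eq_matI) auto
  then show ?case using z by (simp add: zero_mat_def)
next
  case (Suc K)
  have XK: "X K \<in> carrier_mat t t" using Suc(2) R by blast
  have "mat t t (\<lambda>(i,j). \<Sum>s<Suc K. X s $$ (i,j)) = mat t t (\<lambda>(i,j). \<Sum>s<K. X s $$ (i,j)) + X K"
    using XK by (intro eq_matI) auto
  then have eq: "mat t t (\<lambda>(i,j). \<Sum>s<Suc K. X s $$ (i,j)) = mat t t (\<lambda>(i,j). \<Sum>s<K. X s $$ (i,j)) + X K" .
  show ?case
    apply (subst eq)
    apply (rule add)
     apply (rule Suc.hyps)
    using Suc.prems apply simp
    using Suc.prems apply simp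
    done
qed

lemma sl_add: fixes A B :: "'a::comm_ring_1 mat" assumes A: "A \<in> carrier_mat (sum_list ns) (sum_list ns)" and B: "B \<in> carrier_mat (sum_list ns) (sum_list ns)"
  shows "sl ns (A + B) p q = sl ns A p q + sl ns B p q"
proof (rule eq_matI)
  fix i j assume "i < dim_row (sl ns A p q + sl ns B p q)" "j < dim_col (sl ns A p q + sl ns B p q)"
  then have i: "i < length ns" and j: "j < length ns" by auto
  show "sl ns (A + B) p q $$ (i, j) = (sl ns A p q + sl ns B p q) $$ (i, j)"
    using off_le[OF i] off_le[OF j] A B i j by (auto simp: bent_def)
qed auto

lemma sl_smult: fixes A :: "'a::comm_ring_1 mat" assumes A: "A \<in> carrier_mat (sum_list ns) (sum_list ns)"
  shows "sl ns (a \<cdot>\<^sub>m A) p q = a \<cdot>\<^sub>m sl ns A p q"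
proof (rule eq_matI)
  fix i j assume "i < dim_row (a \<cdot>\<^sub>m sl ns A p q)" "j < dim_col (a \<cdot>\<^sub>m sl ns A p q)"
  then have i: "i < length ns" and j: "j < length ns" by auto
  show "sl ns (a \<cdot>\<^sub>m A) p q $$ (i, j) = (a \<cdot>\<^sub>m sl ns A p q) $$ (i, j)"
    using off_le[OF i] off_le[OF j] A i j by (auto simp: bent_def)
qed auto



declare One_nat_def [simp del]

lemma off_mono: "i < j \<Longrightarrow> j \<le> length ns \<Longrightarrow> off ns i + ns ! i \<le> off ns j"
proof -
  assume ij: "i < j" "j \<le> length ns"
  have "off ns i + ns ! i = (\<Sum>k<Suc i. ns ! k)" using ij by (simp add: off_eq)
  also have "\<dots> \<le> (\<Sum>k<j. ns ! k)" by (rule sum_mono2) (use ij in auto)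
  finally show ?thesis using ij by (simp add: off_eq)
qed

lemma off_disj: "i < length ns \<Longrightarrow> j < length ns \<Longrightarrow> i \<noteq> j \<Longrightarrow> p < ns ! i \<Longrightarrow> q < ns ! j \<Longrightarrow>
   off ns i + p \<noteq> off ns j + q"
  by (metis add_less_cancel_left le_add1 less_le_trans linorder_neqE_nat nat_less_le off_mono order_le_less_trans)

lemma ssol_add: "ssol t eqs A \<Longrightarrow> ssol t eqs B \<Longrightarrow> A \<in> carrier_mat t t \<Longrightarrow> B \<in> carrier_mat t t \<Longrightarrow>
   ssol t eqs (A + B)"
  unfolding ssol_def by (simp add: distrib_left sum.distrib)

lemma ssol_smult: "ssol t eqs A \<Longrightarrow> A \<in> carrier_mat t t \<Longrightarrow> ssol t eqs (a \<cdot>\<^sub>m A)"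
proof -
  assume s: "ssol t eqs A" and A: "A \<in> carrier_mat t t"
  have "(\<Sum>i<t. \<Sum>j<t. cc i j * (a \<cdot>\<^sub>m A) $$ (i,j)) = a * (\<Sum>i<t. \<Sum>j<t. cc i j * A $$ (i,j))" for cc
    using A by (simp add: sum_distrib_left mult.left_commute)
  then show ?thesis using s unfolding ssol_def by simp
qed

lemma ssol_zero: "ssol t eqs (0\<^sub>m t t)"
  unfolding ssol_def by simp

locale lmp =
  fixes t :: nat
    and E :: "(nat \<times> nat) set"
    and eqsG eqsM :: "(nat \<Rightarrow> nat \<Rightarrow> 'a::{field,linorder}) set"
    and Nd Nf :: "(nat \<times> nat) set"
    and c :: "nat \<times> nat \<Rightarrow> nat \<times> nat \<Rightarrow> 'a"
  assumes equiv: "equiv {0..<t} E"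
    and eqsG: "\<forall>e\<in>eqsG. one_class_pair E t e \<and> (\<forall>i j. e i j \<noteq> 0 \<longrightarrow> i < j)"
    and G_mult: "\<forall>A\<in>red_alg (replicate t 1) E eqsG. \<forall>B\<in>red_alg (replicate t 1) E eqsG.
                   A * B \<in> red_alg (replicate t 1) E eqsG"
    and GM: "\<forall>A\<in>red_alg (replicate t 1) E eqsG. \<forall>B\<in>Mnn (replicate t 1) eqsM.
                   A * B \<in> Mnn (replicate t 1) eqsM \<and> B * A \<in> Mnn (replicate t 1) eqsM"
    and NdNf: "Nd \<union> Nf = {0..<t} \<times> {0..<t}" "Nd \<inter> Nf = {}"
    and c_shape: "\<forall>(l, r)\<in>Nd. \<forall>i j. c (l, r) (i, j) \<noteq> 0 \<longrightarrow>
                   (i, j) \<in> Nf \<and> (i, l) \<in> E \<and> (j, r) \<in> E \<and> unk_less (i, j) (l, r)"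
    and GJ: "Mnn (replicate t 1) eqsM = {m \<in> carrier_mat t t.
               \<forall>(l, r)\<in>Nd. m $$ (l, r) = (\<Sum>(i, j)\<in>Nf. c (l, r) (i, j) * m $$ (i, j))}"
begin

abbreviation "G1 \<equiv> red_alg (replicate t 1) E eqsG"
abbreviation "MM1 \<equiv> Mnn (replicate t 1) eqsM"

lemma E_sub: "E \<subseteq> {0..<t} \<times> {0..<t}"
  using equiv unfolding equiv_def refl_on_def by auto

lemma E_sym: "(i,j) \<in> E \<Longrightarrow> (j,i) \<in> E"
  using equiv unfolding equiv_def sym_def by auto

lemma E_trans: "(i,j) \<in> E \<Longrightarrow> (j,k) \<in> E \<Longrightarrow> (i,k) \<in> E"
  using equiv unfolding equiv_def trans_def by blast

lemmas G1_char = red_alg_rep[OF E_sub]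

lemma G1_carrier: "G1 \<subseteq> carrier_mat t t" using G1_char by auto

lemma G1I: assumes "m \<in> carrier_mat t t" "\<And>i j. j < i \<Longrightarrow> i < t \<Longrightarrow> m $$ (i,j) = 0"
    "\<And>i j. (i,j) \<in> E \<Longrightarrow> i < t \<Longrightarrow> j < t \<Longrightarrow> m $$ (i,i) = m $$ (j,j)" "ssol t eqsG m"
  shows "m \<in> G1"
proof -
  have "\<forall>(i,j)\<in>E. m $$ (i,i) = m $$ (j,j)"
  proof clarify
    fix i j assume ij: "(i,j) \<in> E"
    then have "i < t" "j < t" using E_sub by auto
    then show "m $$ (i,i) = m $$ (j,j)" using assms(3) ij by blast
  qed
  then show ?thesis unfolding G1_char using assms by blast
qed

lemma G1D: assumes "m \<in> G1"
  shows "m \<in> carrier_mat t t" "\<And>i j. j < i \<Longrightarrow> i < t \<Longrightarrow> m $$ (i,j) = 0"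
    "\<And>i j. (i,j) \<in> E \<Longrightarrow> m $$ (i,i) = m $$ (j,j)" "ssol t eqsG m"
  using assms unfolding G1_char by auto

lemma G1_zero: "0\<^sub>m t t \<in> G1" by (rule G1I) (auto simp: ssol_zero)

lemma G1_add: assumes A: "A \<in> G1" and B: "B \<in> G1" shows "A + B \<in> G1"
proof (rule G1I)
  show "A + B \<in> carrier_mat t t" using G1D(1)[OF A] G1D(1)[OF B] by simp
  show "(A + B) $$ (i, j) = 0" if "j < i" "i < t" for i j
    using that G1D(1,2)[OF A] G1D(1,2)[OF B] by simp
  show "(A + B) $$ (i, i) = (A + B) $$ (j, j)" if "(i, j) \<in> E" "i < t" "j < t" for i j
    using that G1D(1,3)[OF A] G1D(1,3)[OF B] by simp
  show "ssol t eqsG (A + B)" using ssol_add G1D(1,4)[OF A] G1D(1,4)[OF B] by blast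
qed

lemma G1_smult: assumes A: "A \<in> G1" shows "a \<cdot>\<^sub>m A \<in> G1"
proof (rule G1I)
  show "a \<cdot>\<^sub>m A \<in> carrier_mat t t" using G1D(1)[OF A] by simp
  show "(a \<cdot>\<^sub>m A) $$ (i, j) = 0" if "j < i" "i < t" for i j
    using that G1D(1,2)[OF A] by simp
  show "(a \<cdot>\<^sub>m A) $$ (i, i) = (a \<cdot>\<^sub>m A) $$ (j, j)" if "(i, j) \<in> E" "i < t" "j < t" for i j
    using that G1D(1,3)[OF A] by simp
  show "ssol t eqsG (a \<cdot>\<^sub>m A)" using ssol_smult G1D(1,4)[OF A] by blast
qed

lemma MM1_carrier: "MM1 \<subseteq> carrier_mat t t"
proof
  fix x assume "x \<in> MM1" then show "x \<in> carrier_mat t t" by (simp add: Mnn_rep)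
qed
lemma MM1_zero: "0\<^sub>m t t \<in> MM1" unfolding Mnn_rep by (simp add: ssol_zero)
lemma MM1_add: "A \<in> MM1 \<Longrightarrow> B \<in> MM1 \<Longrightarrow> A + B \<in> MM1" unfolding Mnn_rep using ssol_add by (metis add_carrier_mat)

context
  fixes ns :: "nat list"
  assumes st: "step_seq t E ns"
begin

lemma len: "length ns = t" using st unfolding step_seq_def by simp
lemma st_eq: "(i,j) \<in> E \<Longrightarrow> ns ! i = ns ! j" using st unfolding step_seq_def by auto

lemma E_sub': "E \<subseteq> {0..<length ns} \<times> {0..<length ns}" using E_sub len by simp

lemma GA_char: "M \<in> red_alg ns E eqsG \<longleftrightarrow> M \<in> carrier_mat (sum_list ns) (sum_list ns) \<and> (\<forall>p q. sl ns M p q \<in> G1)"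
  using red_alg_sl[OF E_sub', where eqs = eqsG and M = M] st len unfolding step_seq_def by simp

lemma MA_char: "M \<in> Mnn ns eqsM \<longleftrightarrow> M \<in> carrier_mat (sum_list ns) (sum_list ns) \<and> (\<forall>p q. sl ns M p q \<in> MM1)"
  using Mnn_sl[of M ns eqsM] len by simp

lemma GA_carrier: "M \<in> red_alg ns E eqsG \<Longrightarrow> M \<in> carrier_mat (sum_list ns) (sum_list ns)"
  using GA_char by auto

lemma MA_carrier: "M \<in> Mnn ns eqsM \<Longrightarrow> M \<in> carrier_mat (sum_list ns) (sum_list ns)"
  using MA_char by auto

lemma GA_mult: assumes A: "A \<in> red_alg ns E eqsG" and B: "B \<in> red_alg ns E eqsG"
  shows "A * B \<in> red_alg ns E eqsG"
proof -
  have Ac: "A \<in> carrier_mat (sum_list ns) (sum_list ns)" and As: "\<And>p q. sl ns A p q \<in> G1"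
    using A GA_char by auto
  have Bc: "B \<in> carrier_mat (sum_list ns) (sum_list ns)" and Bs: "\<And>p q. sl ns B p q \<in> G1"
    using B GA_char by auto
  have "sl ns (A * B) p q \<in> G1" for p q
    unfolding sl_mult[OF Ac Bc] len
    by (rule sum_closed[OF G1_carrier G1_zero G1_add]) (use G_mult As Bs in auto)
  then show ?thesis using Ac Bc GA_char by auto
qed

lemma GA_add: assumes A: "A \<in> red_alg ns E eqsG" and B: "B \<in> red_alg ns E eqsG"
  shows "A + B \<in> red_alg ns E eqsG"
proof -
  have Ac: "A \<in> carrier_mat (sum_list ns) (sum_list ns)" and As: "\<And>p q. sl ns A p q \<in> G1"
    using A GA_char by auto
  have Bc: "B \<in> carrier_mat (sum_list ns) (sum_list ns)" and Bs: "\<And>p q. sl ns B p q \<in> G1"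
    using B GA_char by auto
  show ?thesis unfolding GA_char using Ac Bc As Bs by (auto simp: sl_add G1_add)
qed

lemma GA_smult: assumes A: "A \<in> red_alg ns E eqsG"
  shows "a \<cdot>\<^sub>m A \<in> red_alg ns E eqsG"
proof -
  have Ac: "A \<in> carrier_mat (sum_list ns) (sum_list ns)" and As: "\<And>p q. sl ns A p q \<in> G1"
    using A GA_char by auto
  show ?thesis unfolding GA_char using Ac As by (auto simp: sl_smult G1_smult)
qed

lemma GA_one: "1\<^sub>m (sum_list ns) \<in> red_alg ns E eqsG"
proof -
  have "sl ns (1\<^sub>m (sum_list ns)) p q \<in> G1" for p q
  proof -
    let ?m = "sl ns (1\<^sub>m (sum_list ns)) p q"
    have b: "bent ns (1\<^sub>m (sum_list ns)) i j p q = (if i = j \<and> p = q \<and> p < ns ! i then 1 else 0)"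
      if "i < t" "j < t" for i j
    proof -
      have i: "i < length ns" and j: "j < length ns" using that len by auto
      show ?thesis using off_le[OF i] off_le[OF j] off_disj[OF i j] unfolding bent_def by (cases "i = j") auto
    qed
    have s: "ssol t eqsG ?m"
      unfolding ssol_def
    proof
      fix cc assume cc: "cc \<in> eqsG"
      have "cc i i = 0" for i using eqsG cc by auto
      then show "(\<Sum>i<t. \<Sum>j<t. cc i j * ?m $$ (i,j)) = 0"
        using len by (auto simp: b intro!: sum.neutral)
    qed
    show ?thesis unfolding G1_char using s len E_sub st_eq
      by (auto simp: b)
  qed
  then show ?thesis unfolding GA_char by auto
qed

lemma MA_left: assumes A: "A \<in> red_alg ns E eqsG" and B: "B \<in> Mnn ns eqsM"
  shows "A * B \<in> Mnn ns eqsM"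
proof -
  have Ac: "A \<in> carrier_mat (sum_list ns) (sum_list ns)" and As: "\<And>p q. sl ns A p q \<in> G1"
    using A GA_char by auto
  have Bc: "B \<in> carrier_mat (sum_list ns) (sum_list ns)" and Bs: "\<And>p q. sl ns B p q \<in> MM1"
    using B MA_char by auto
  have "sl ns (A * B) p q \<in> MM1" for p q
    unfolding sl_mult[OF Ac Bc] len
    by (rule sum_closed[OF MM1_carrier MM1_zero MM1_add]) (use GM As Bs in auto)
  then show ?thesis using Ac Bc MA_char by auto
qed

lemma MA_right: assumes A: "A \<in> red_alg ns E eqsG" and B: "B \<in> Mnn ns eqsM"
  shows "B * A \<in> Mnn ns eqsM"
proof -
  have Ac: "A \<in> carrier_mat (sum_list ns) (sum_list ns)" and As: "\<And>p q. sl ns A p q \<in> G1"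
    using A GA_char by auto
  have Bc: "B \<in> carrier_mat (sum_list ns) (sum_list ns)" and Bs: "\<And>p q. sl ns B p q \<in> MM1"
    using B MA_char by auto
  have "sl ns (B * A) p q \<in> MM1" for p q
    unfolding sl_mult[OF Bc Ac] len
    by (rule sum_closed[OF MM1_carrier MM1_zero MM1_add]) (use GM As Bs in auto)
  then show ?thesis using Ac Bc MA_char by auto
qed

lemma Nd_sub: "Nd \<subseteq> {0..<t} \<times> {0..<t}" and Nf_sub: "Nf \<subseteq> {0..<t} \<times> {0..<t}"
  using NdNf by auto

lemma finite_Nf: "finite Nf" using Nf_sub finite_subset by blast

lemma MA_dep: "M \<in> Mnn ns eqsM \<longleftrightarrow> M \<in> carrier_mat (sum_list ns) (sum_list ns) \<and>
   (\<forall>(l, r)\<in>Nd. \<forall>p < ns ! l. \<forall>q < ns ! r.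
      bent ns M l r p q = (\<Sum>(i, j)\<in>Nf. c (l, r) (i, j) * bent ns M i j p q))"
proof -
  have s: "sl ns M p q \<in> MM1 \<longleftrightarrow> (\<forall>(l, r)\<in>Nd. bent ns M l r p q = (\<Sum>(i, j)\<in>Nf. c (l, r) (i, j) * bent ns M i j p q))"
    for p q
  proof -
    have 1: "(\<Sum>(i, j)\<in>Nf. c (l, r) (i, j) * sl ns M p q $$ (i, j)) = (\<Sum>(i, j)\<in>Nf. c (l, r) (i, j) * bent ns M i j p q)" for l r
      using Nf_sub len by (intro sum.cong) auto
    have "sl ns M p q \<in> MM1 \<longleftrightarrow> (\<forall>(l, r)\<in>Nd. sl ns M p q $$ (l, r) = (\<Sum>(i, j)\<in>Nf. c (l, r) (i, j) * bent ns M i j p q))"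
      unfolding GJ using len 1 by auto
    also have "\<dots> \<longleftrightarrow> (\<forall>(l, r)\<in>Nd. bent ns M l r p q = (\<Sum>(i, j)\<in>Nf. c (l, r) (i, j) * bent ns M i j p q))"
      using Nd_sub len by (intro ball_cong refl) auto
    finally show ?thesis .
  qed
  have z: "(\<Sum>(i, j)\<in>Nf. c (l, r) (i, j) * bent ns M i j p q) = 0"
    if lr: "(l,r) \<in> Nd" and pq: "\<not> (p < ns ! l \<and> q < ns ! r)" for l r p q
  proof (rule sum.neutral, clarify)
    fix i j assume "(i,j) \<in> Nf"
    show "c (l, r) (i, j) * bent ns M i j p q = 0"
    proof (cases "c (l, r) (i, j) = 0")
      case False
      then have "(i,l) \<in> E" "(j,r) \<in> E" using c_shape lr by auto
      then have "ns ! i = ns ! l" "ns ! j = ns ! r" using st_eq by auto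
      then show ?thesis using pq unfolding bent_def by auto
    qed simp
  qed
  have "(\<forall>p q. \<forall>(l, r)\<in>Nd. bent ns M l r p q = (\<Sum>(i, j)\<in>Nf. c (l, r) (i, j) * bent ns M i j p q)) \<longleftrightarrow>
        (\<forall>(l, r)\<in>Nd. \<forall>p < ns ! l. \<forall>q < ns ! r.
            bent ns M l r p q = (\<Sum>(i, j)\<in>Nf. c (l, r) (i, j) * bent ns M i j p q))"
  proof
    assume "\<forall>p q. \<forall>(l, r)\<in>Nd. bent ns M l r p q = (\<Sum>(i, j)\<in>Nf. c (l, r) (i, j) * bent ns M i j p q)"
    then show "\<forall>(l, r)\<in>Nd. \<forall>p < ns ! l. \<forall>q < ns ! r.
            bent ns M l r p q = (\<Sum>(i, j)\<in>Nf. c (l, r) (i, j) * bent ns M i j p q)" by blast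
  next
    assume H: "\<forall>(l, r)\<in>Nd. \<forall>p < ns ! l. \<forall>q < ns ! r.
            bent ns M l r p q = (\<Sum>(i, j)\<in>Nf. c (l, r) (i, j) * bent ns M i j p q)"
    show "\<forall>p q. \<forall>(l, r)\<in>Nd. bent ns M l r p q = (\<Sum>(i, j)\<in>Nf. c (l, r) (i, j) * bent ns M i j p q)"
    proof (intro allI, clarify)
      fix p q l r assume lr: "(l,r) \<in> Nd"
      show "bent ns M l r p q = (\<Sum>(i, j)\<in>Nf. c (l, r) (i, j) * bent ns M i j p q)"
      proof (cases "p < ns ! l \<and> q < ns ! r")
        case True then show ?thesis using H lr by fast
      next
        case False
        then have "bent ns M l r p q = 0" unfolding bent_def by auto
        then show ?thesis using z[OF lr False] by simp
      qed
    qed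
  qed
  then show ?thesis unfolding MA_char s by (simp only:)
qed

end

end



lemma pow_carrier: "S \<in> carrier_mat n n \<Longrightarrow> S ^\<^sub>m k \<in> carrier_mat n n"
  by (induct k) auto

lemma pow_Suc': "S \<in> carrier_mat n n \<Longrightarrow> S * S ^\<^sub>m k = S ^\<^sub>m (Suc k)"
proof (induct k)
  case 0 then show ?case by simp
next
  case (Suc k)
  have "S * S ^\<^sub>m Suc k = (S * S ^\<^sub>m k) * S"
    by (metis Suc.prems assoc_mult_mat pow_mat.simps(2) pow_carrier)
  also have "\<dots> = S ^\<^sub>m Suc (Suc k)" using Suc by simp
  finally show ?case .
qed

lemma pow_add_mat: "S \<in> carrier_mat n n \<Longrightarrow> S ^\<^sub>m a * S ^\<^sub>m b = S ^\<^sub>m (a + b)"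
proof (induct b)
  case 0 then show ?case using pow_carrier[OF 0] by simp
next
  case (Suc b)
  have "S ^\<^sub>m a * S ^\<^sub>m Suc b = (S ^\<^sub>m a * S ^\<^sub>m b) * S"
    by (metis Suc.prems assoc_mult_mat pow_mat.simps(2) pow_carrier)
  then show ?case using Suc by simp
qed

lemma cancel_pow: assumes S: "S \<in> carrier_mat n n" and B: "B \<in> carrier_mat n n" and BS: "B * S = 1\<^sub>m n"
  and Y: "Y \<in> carrier_mat n n" and z: "S ^\<^sub>m k * Y = 0\<^sub>m n n"
  shows "Y = 0\<^sub>m n n"
  using Y z
proof (induct k arbitrary: Y)
  case 0 then show ?case using S by simp
next
  case (Suc k)
  have "S ^\<^sub>m Suc k * Y = S ^\<^sub>m k * (S * Y)"
    by (metis S Suc.prems(1) assoc_mult_mat pow_mat.simps(2) pow_carrier)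
  then have "S * Y = 0\<^sub>m n n" using Suc S by (metis mult_carrier_mat)
  then have "B * (S * Y) = 0\<^sub>m n n" using B by simp
  moreover have "B * (S * Y) = Y" using B S Suc.prems BS
    by (metis assoc_mult_mat left_mult_one_mat)
  ultimately show ?case by simp
qed

lemma mult_lc:
  fixes X :: "'a::comm_ring_1 mat"
  assumes X: "X \<in> carrier_mat n n" and F: "\<And>k. F k \<in> carrier_mat n n"
  shows "X * mat n n (\<lambda>(p,q). \<Sum>k<K. w k * F k $$ (p,q)) =
         mat n n (\<lambda>(p,q). \<Sum>k<K. w k * (X * F k) $$ (p,q))"
proof (rule eq_matI)
  fix p q assume pq: "p < dim_row (mat n n (\<lambda>(p,q). \<Sum>k<K. w k * (X * F k) $$ (p,q)))"
    "q < dim_col (mat n n (\<lambda>(p,q). \<Sum>k<K. w k * (X * F k) $$ (p,q)))"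
  then have p: "p < n" and q: "q < n" by auto
  have "(X * mat n n (\<lambda>(p,q). \<Sum>k<K. w k * F k $$ (p,q))) $$ (p,q) =
     (\<Sum>y<n. X $$ (p,y) * (\<Sum>k<K. w k * F k $$ (y,q)))"
    using X p q by (auto simp: scalar_prod_def atLeast0LessThan intro!: sum.cong)
  also have "\<dots> = (\<Sum>y<n. \<Sum>k<K. w k * (X $$ (p,y) * F k $$ (y,q)))"
    by (simp add: sum_distrib_left mult.left_commute)
  also have "\<dots> = (\<Sum>k<K. \<Sum>y<n. w k * (X $$ (p,y) * F k $$ (y,q)))"
    by (rule sum.swap)
  also have "\<dots> = (\<Sum>k<K. w k * (\<Sum>y<n. X $$ (p,y) * F k $$ (y,q)))"
    by (simp add: sum_distrib_left)
  also have "\<dots> = (\<Sum>k<K. w k * (X * F k) $$ (p,q))"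
  proof (rule sum.cong[OF refl])
    fix k
    have Fk: "F k \<in> carrier_mat n n" by (rule F)
    show "w k * (\<Sum>y<n. X $$ (p,y) * F k $$ (y,q)) = w k * (X * F k) $$ (p,q)"
      using X Fk p q by (auto simp: scalar_prod_def atLeast0LessThan intro!: sum.cong)
  qed
  finally show "(X * mat n n (\<lambda>(p,q). \<Sum>k<K. w k * F k $$ (p,q))) $$ (p,q) =
     mat n n (\<lambda>(p,q). \<Sum>k<K. w k * (X * F k) $$ (p,q)) $$ (p,q)" using p q by simp
qed (use X in auto)

lemma lc_closed:
  assumes Rc: "R \<subseteq> carrier_mat n n" and zero: "0\<^sub>m n n \<in> R"
    and add: "\<And>A B. A \<in> R \<Longrightarrow> B \<in> R \<Longrightarrow> A + B \<in> R"
    and sm: "\<And>A a. A \<in> R \<Longrightarrow> a \<cdot>\<^sub>m A \<in> R"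
    and F: "\<And>k. F k \<in> R"
  shows "mat n n (\<lambda>(p,q). \<Sum>k<(K::nat). w k * F k $$ (p,q)) \<in> R"
proof (induct K)
  case 0
  show ?case using zero by (simp add: zero_mat_def)
next
  case (Suc K)
  have FK: "F K \<in> carrier_mat n n" using F Rc by blast
  have "mat n n (\<lambda>(p,q). \<Sum>k<Suc K. w k * F k $$ (p,q)) =
        mat n n (\<lambda>(p,q). \<Sum>k<K. w k * F k $$ (p,q)) + w K \<cdot>\<^sub>m F K"
    using FK by (intro eq_matI) auto
  then show ?case
    apply (rule ssubst)
    apply (rule add[OF Suc])
    by (rule sm[OF F])
qed

lemma inv_in_alg:
  fixes R :: "'a::field mat set"
  assumes Rc: "R \<subseteq> carrier_mat n n" and one: "1\<^sub>m n \<in> R"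
    and add: "\<And>A B. A \<in> R \<Longrightarrow> B \<in> R \<Longrightarrow> A + B \<in> R"
    and sm: "\<And>A a. A \<in> R \<Longrightarrow> a \<cdot>\<^sub>m A \<in> R"
    and mul: "\<And>A B. A \<in> R \<Longrightarrow> B \<in> R \<Longrightarrow> A * B \<in> R"
    and SR: "S \<in> R" and B: "B \<in> carrier_mat n n" and SB: "S * B = 1\<^sub>m n" and BS: "B * S = 1\<^sub>m n"
  shows "B \<in> R"
proof -
  have S: "S \<in> carrier_mat n n" using SR Rc by blast
  define pw where "pw k = S ^\<^sub>m k" for k
  have pwc: "pw k \<in> carrier_mat n n" for k unfolding pw_def using pow_carrier[OF S] .
  have zero: "0\<^sub>m n n \<in> R"
  proof -
    have "0 \<cdot>\<^sub>m 1\<^sub>m n = (0\<^sub>m n n :: 'a mat)" by (rule eq_matI) auto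
    then show ?thesis using sm[OF one, of 0] by simp
  qed
  have pwR: "pw k \<in> R" for k
  proof (induct k)
    case 0 then show ?case using one S unfolding pw_def by simp
  next
    case (Suc k) then show ?case using mul[OF _ SR] unfolding pw_def by simp
  qed
  define lc where "lc w K = mat n n (\<lambda>(p,q). \<Sum>k<(K::nat). w k * pw k $$ (p,q))" for w K
  have lcR: "lc w K \<in> R" for w K unfolding lc_def by (rule lc_closed[OF Rc zero add sm pwR])
  have lcc: "lc w K \<in> carrier_mat n n" for w K unfolding lc_def by simp
  define N where "N = n * n"
  define Am where "Am = mat\<^sub>r (Suc N) (Suc N) (\<lambda>x. if x = N then 0\<^sub>v (Suc N) else
                      vec (Suc N) (\<lambda>k. pw k $$ (x div n, x mod n)))"
  have detA: "det Am = 0"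
    unfolding Am_def by (rule det_row_0) auto
  have Ac: "Am \<in> carrier_mat (Suc N) (Suc N)" unfolding Am_def by simp
  obtain v where v: "v \<in> carrier_vec (Suc N)" "v \<noteq> 0\<^sub>v (Suc N)" "Am *\<^sub>v v = 0\<^sub>v (Suc N)"
    using det_0_iff_vec_prod_zero_field[OF Ac] detA by blast
  have key: "(\<Sum>k<Suc N. v $ k * pw k $$ (p,q)) = 0" if p: "p < n" and q: "q < n" for p q
  proof -
    define x where "x = p * n + q"
    have "p * n + q < Suc p * n" using q by simp
    also have "Suc p * n \<le> n * n" using p by (intro mult_le_mono1) simp
    finally have x: "x < N" unfolding x_def N_def .
    have xd: "x div n = p" "x mod n = q" unfolding x_def using p q by auto
    have "(Am *\<^sub>v v) $ x = 0" using v(3) x by simp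
    moreover have "(Am *\<^sub>v v) $ x = (\<Sum>k<Suc N. pw k $$ (p,q) * v $ k)"
      using x v(1) xd unfolding Am_def by (auto simp: scalar_prod_def atLeast0LessThan intro!: sum.cong)
    ultimately show ?thesis by (simp add: mult.commute)
  qed
  have ex: "\<exists>k<Suc N. v $ k \<noteq> 0"
  proof (rule ccontr)
    assume "\<not> ?thesis"
    then have "v = 0\<^sub>v (Suc N)" using v(1) by (intro eq_vecI) auto
    then show False using v(2) by simp
  qed
  define z where "z = (LEAST k. v $ k \<noteq> 0)"
  have vz: "v $ z \<noteq> 0" unfolding z_def using ex by (metis (mono_tags, lifting) LeastI)
  have zN: "z \<le> N" unfolding z_def using ex by (meson Least_le less_Suc_eq_le order_trans)
  have below: "v $ k = 0" if "k < z" for k using that unfolding z_def using not_less_Least by blast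
  define K where "K = N - z"
  define w' where "w' k = v $ (k + z)" for k
  have "pw z * lc w' (Suc K) = lc (\<lambda>k. v $ k) (Suc N)"
  proof -
    have "pw z * lc w' (Suc K) = mat n n (\<lambda>(p,q). \<Sum>k<Suc K. w' k * (pw z * pw k) $$ (p,q))"
      unfolding lc_def by (rule mult_lc[OF pwc pwc])
    also have "\<dots> = lc (\<lambda>k. v $ k) (Suc N)"
    proof (rule eq_matI)
      fix p q assume "p < dim_row (lc (\<lambda>k. v $ k) (Suc N))" "q < dim_col (lc (\<lambda>k. v $ k) (Suc N))"
      then have p: "p < n" and q: "q < n" unfolding lc_def by auto
      have "(\<Sum>k<Suc N. v $ k * pw k $$ (p,q)) = (\<Sum>k<z + Suc K. v $ k * pw k $$ (p,q))"
        unfolding K_def using zN by (simp add: Suc_diff_le)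
      also have "\<dots> = (\<Sum>k<z. v $ k * pw k $$ (p,q)) + (\<Sum>k<Suc K. v $ (z + k) * pw (z + k) $$ (p,q))"
        by (rule sum_add_split)
      also have "(\<Sum>k<z. v $ k * pw k $$ (p,q)) = 0" using below by simp
      also have "(\<Sum>k<Suc K. v $ (z + k) * pw (z + k) $$ (p,q)) = (\<Sum>k<Suc K. w' k * (pw z * pw k) $$ (p,q))"
        unfolding w'_def pw_def using pow_add_mat[OF S] by (simp add: add.commute)
      finally show "mat n n (\<lambda>(p,q). \<Sum>k<Suc K. w' k * (pw z * pw k) $$ (p,q)) $$ (p,q) = lc (\<lambda>k. v $ k) (Suc N) $$ (p,q)"
        using p q unfolding lc_def by simp
    qed (auto simp: lc_def)
    finally show ?thesis .
  qed
  also have "lc (\<lambda>k. v $ k) (Suc N) = 0\<^sub>m n n"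
    unfolding lc_def by (rule eq_matI) (auto simp: key simp del: sum.lessThan_Suc)
  finally have "pw z * lc w' (Suc K) = 0\<^sub>m n n" .
  then have lc0: "lc w' (Suc K) = 0\<^sub>m n n"
    using cancel_pow[OF S B BS lcc] unfolding pw_def by blast
  define w where "w k = w' (Suc k)" for k
  define D where "D = lc w K"
  have "lc w' (Suc K) = v $ z \<cdot>\<^sub>m 1\<^sub>m n + S * D"
  proof -
    have "S * D = mat n n (\<lambda>(p,q). \<Sum>k<K. w k * (S * pw k) $$ (p,q))"
      unfolding D_def lc_def by (rule mult_lc[OF S pwc])
    also have "\<dots> = mat n n (\<lambda>(p,q). \<Sum>k<K. w' (Suc k) * pw (Suc k) $$ (p,q))"
      unfolding w_def pw_def using pow_Suc'[OF S] by simp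
    finally have SD: "S * D = \<dots>" .
    show ?thesis
    proof (rule eq_matI)
      fix p q assume "p < dim_row (v $ z \<cdot>\<^sub>m 1\<^sub>m n + S * D)" "q < dim_col (v $ z \<cdot>\<^sub>m 1\<^sub>m n + S * D)"
      then have p: "p < n" and q: "q < n" using S lcc[of w K] unfolding D_def by auto
      have "lc w' (Suc K) $$ (p,q) = (\<Sum>k<Suc K. w' k * pw k $$ (p,q))" using p q unfolding lc_def by simp
      also have "\<dots> = w' 0 * pw 0 $$ (p,q) + (\<Sum>k<K. w' (Suc k) * pw (Suc k) $$ (p,q))"
        by (rule sum.lessThan_Suc_shift)
      also have "w' 0 = v $ z" unfolding w'_def by simp
      also have "pw 0 $$ (p,q) = 1\<^sub>m n $$ (p,q)" unfolding pw_def using S by simp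
      finally show "lc w' (Suc K) $$ (p,q) = (v $ z \<cdot>\<^sub>m 1\<^sub>m n + S * D) $$ (p,q)"
        using p q S SD by (simp add: lcc)
    qed (use S lcc[of w K] lcc[of w' "Suc K"] in \<open>auto simp: D_def\<close>)
  qed
  then have Z: "v $ z \<cdot>\<^sub>m 1\<^sub>m n + S * D = 0\<^sub>m n n" using lc0 by simp
  have Dc: "D \<in> carrier_mat n n" unfolding D_def by (rule lcc)
  have "B * (v $ z \<cdot>\<^sub>m 1\<^sub>m n + S * D) = v $ z \<cdot>\<^sub>m B + D"
  proof -
    have "B * (v $ z \<cdot>\<^sub>m 1\<^sub>m n + S * D) = B * (v $ z \<cdot>\<^sub>m 1\<^sub>m n) + B * (S * D)"
      using B S Dc by (intro mult_add_distrib_mat) auto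
    also have "B * (v $ z \<cdot>\<^sub>m 1\<^sub>m n) = v $ z \<cdot>\<^sub>m B"
      using mult_smult_distrib[OF B one_carrier_mat, of "v $ z"] B by simp
    also have "B * (S * D) = D" using B S Dc BS by (metis assoc_mult_mat left_mult_one_mat)
    finally show ?thesis .
  qed
  then have E0: "v $ z \<cdot>\<^sub>m B + D = 0\<^sub>m n n" using Z B by simp
  have "B = (- inverse (v $ z)) \<cdot>\<^sub>m D"
  proof (rule eq_matI)
    fix p q assume "p < dim_row ((- inverse (v $ z)) \<cdot>\<^sub>m D)" "q < dim_col ((- inverse (v $ z)) \<cdot>\<^sub>m D)"
    then have p: "p < n" and q: "q < n" using Dc by auto
    have "(v $ z \<cdot>\<^sub>m B + D) $$ (p,q) = 0" using E0 p q by simp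
    then have "v $ z * B $$ (p,q) + D $$ (p,q) = 0" using p q B Dc by simp
    then show "B $$ (p,q) = ((- inverse (v $ z)) \<cdot>\<^sub>m D) $$ (p,q)" using p q Dc vz
      by (simp add: field_simps) (metis add_eq_0_iff minus_mult_right)
  qed (use B Dc in auto)
  then show ?thesis using sm[OF lcR] unfolding D_def by simp
qed



definition base :: "(nat \<Rightarrow> nat list) \<Rightarrow> nat \<Rightarrow> nat" where
  "base P i = (\<Sum>k<i. length (P k))"

lemma length_concat_upt: "length (concat (map P [0..<i])) = base P i"
  unfolding base_def by (induct i) auto

lemma sum_list_concat_upt: "sum_list (concat (map P [0..<i])) = (\<Sum>k<i. sum_list (P k))"
  by (induct i) auto

lemma concat_split: "i < t \<Longrightarrow> concat (map P [0..<t]) = concat (map P [0..<i]) @ P i @ concat (map P [Suc i..<t])"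
proof -
  assume i: "i < t"
  have "[0..<t] = [0..<i] @ i # [Suc i..<t]" using i
    by (metis le_add1 less_imp_add_positive upt_add_eq_append upt_conv_Cons zero_le)
  then show ?thesis by simp
qed

lemma concat_nth: "i < t \<Longrightarrow> u < length (P i) \<Longrightarrow> concat (map P [0..<t]) ! (base P i + u) = P i ! u"
  using concat_split[of i t P] by (simp add: nth_append length_concat_upt)

lemma concat_off: assumes "i < t" "u \<le> length (P i)"
  shows "off (concat (map P [0..<t])) (base P i + u) = (\<Sum>k<i. sum_list (P k)) + off (P i) u"
proof -
  have "take (base P i + u) (concat (map P [0..<t])) = concat (map P [0..<i]) @ take u (P i)"
    using concat_split[of i t P] assms by (simp add: length_concat_upt)
  then show ?thesis unfolding off_def by (simp add: sum_list_concat_upt)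
qed

lemma length_concat_upt': "length (concat (map P [0..<t])) = (\<Sum>k<t. length (P k))"
  by (induct t) auto

lemma concat_decomp: "a < length (concat (map P [0..<t])) \<Longrightarrow> \<exists>i<t. \<exists>u<length (P i). a = base P i + u"
proof -
  assume "a < length (concat (map P [0..<t]))"
  then have "a < (\<Sum>k<t. length (P k))" by (simp add: length_concat_upt')
  then obtain i where i: "i < t" "(\<Sum>k<i. length (P k)) \<le> a" "a < (\<Sum>k<i. length (P k)) + length (P i)"
    using decomp[where x=a and t=t and f="\<lambda>k. length (P k)"] by auto
  define u where "u = a - (\<Sum>k<i. length (P k))"
  have "u < length (P i)" "a = base P i + u" using i unfolding u_def base_def by auto
  then show ?thesis using i(1) by blast
qed

lemma base_mono: "i < j \<Longrightarrow> base P i + length (P i) \<le> base P j"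
proof -
  assume "i < j"
  have "base P i + length (P i) = (\<Sum>k<Suc i. length (P k))" unfolding base_def by simp
  also have "\<dots> \<le> (\<Sum>k<j. length (P k))" by (rule sum_mono2) (use \<open>i < j\<close> in auto)
  finally show ?thesis unfolding base_def .
qed

lemma off_le_sum: "u < length xs \<Longrightarrow> off xs u + xs ! u \<le> sum_list xs"
  by (rule off_le)

lemma regroup: "concat (map parts [0..<base P t]) =
   concat (map (\<lambda>i. concat (map parts [base P i..<base P i + length (P i)])) [0..<t])"
proof (induct t)
  case 0 then show ?case by (simp add: base_def)
next
  case (Suc t)
  have bs: "base P (Suc t) = base P t + length (P t)" unfolding base_def by simp
  have "[0..<base P (Suc t)] = [0..<base P t] @ [base P t..<base P t + length (P t)]"
    unfolding bs by (rule upt_add_eq_append) simp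
  then have "concat (map parts [0..<base P (Suc t)]) =
     concat (map parts [0..<base P t]) @ concat (map parts [base P t..<base P t + length (P t)])"
    by (simp only: map_append concat_append)
  also have "\<dots> = concat (map (\<lambda>i. concat (map parts [base P i..<base P i + length (P i)])) [0..<t])
      @ concat (map parts [base P t..<base P t + length (P t)])"
    by (simp only: Suc.hyps)
  also have "\<dots> = concat (map (\<lambda>i. concat (map parts [base P i..<base P i + length (P i)])) [0..<Suc t])"
    by simp
  finally show ?case .
qed

lemma sum_list_filter_nz: "sum_list (filter (\<lambda>x. x \<noteq> 0) (xs::nat list)) = sum_list xs"
  by (induct xs) auto

lemma tele:
  fixes ms :: "nat list"
  assumes s: "sorted_wrt (\<ge>) ms" and j: "j < length ms"
  shows "sum_list (map (\<lambda>i. ms ! i - (if Suc i < length ms then ms ! Suc i else 0)) [j..<length ms]) = ms ! j"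
proof -
  define d where "d i = ms ! i - (if Suc i < length ms then ms ! Suc i else 0)" for i
  have "sum_list (map d [j..<length ms]) = ms ! j"
    using j
  proof (induct "length ms - j" arbitrary: j)
    case 0 then show ?case by simp
  next
    case (Suc k)
    have eq: "[j..<length ms] = j # [Suc j..<length ms]" using Suc.prems by (simp add: upt_conv_Cons)
    have split: "sum_list (map d [j..<length ms]) = d j + sum_list (map d [Suc j..<length ms])"
      unfolding eq by (simp del: upt.simps)
    show ?case
    proof (cases "Suc j < length ms")
      case False
      then have "length ms = Suc j" using Suc.prems by simp
      then show ?thesis using split unfolding d_def by simp
    next
      case True
      have ge: "ms ! Suc j \<le> ms ! j" using sorted_wrt_nth_less[OF s, of j "Suc j"] True by simp
      have dj: "d j = ms ! j - ms ! Suc j" using True unfolding d_def by simp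
      have k: "k = length ms - Suc j" using Suc.hyps(2) by arith
      have "sum_list (map d [Suc j..<length ms]) = ms ! Suc j"
        by (rule Suc.hyps(1)[OF k True])
      then show ?thesis using split dj ge by simp
    qed
  qed
  then show ?thesis unfolding d_def .
qed

lemma std_part_block_sum: "sorted_wrt (\<ge>) ms \<Longrightarrow> sum_list (std_part_block ms) = sum_list ms"
proof -
  assume s: "sorted_wrt (\<ge>) ms"
  have "sum_list (std_part_block ms) = (\<Sum>j<length ms. sum_list (map (\<lambda>i. ms ! i - (if Suc i < length ms then ms ! Suc i else 0)) [j..<length ms]))"
    unfolding std_part_block_def sum_list_filter_nz sum_list_concat_upt ..
  also have "\<dots> = (\<Sum>j<length ms. ms ! j)" using tele[OF s] by simp
  finally show ?thesis by (simp add: sum_list_nth_eq)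
qed

lemma sum_list_concat': "sum_list (concat xss) = sum_list (map sum_list (xss :: nat list list))"
  by (induct xss) auto

lemma std_part_sum: "weyr_data ws \<Longrightarrow> sum_list (std_part ws) = dim_row (weyr_mat ws)"
proof -
  assume w: "weyr_data ws"
  have "sum_list (std_part ws) = sum_list (map (\<lambda>w. sum_list (std_part_block (snd w))) ws)"
    unfolding std_part_def by (simp add: sum_list_concat' map_map o_def)
  also have "\<dots> = sum_list (map (\<lambda>w. sum_list (snd w)) ws)"
  proof -
    have "map (\<lambda>w. sum_list (std_part_block (snd w))) ws = map (\<lambda>w. sum_list (snd w)) ws"
      using w unfolding weyr_data_def by (intro map_cong refl) (auto simp: std_part_block_sum)
    then show ?thesis by (rule arg_cong[where f=sum_list])
  qed
  finally show ?thesis unfolding weyr_mat_def by (simp add: Let_def)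
qed



lemma map_upt_shift: "map f [b..<b+n] = map (\<lambda>u. f (b+u)) [0..<n]"
  by (induct n) auto

lemma sum_list_map_upt: "sum_list (map f [b..<b+n]) = (\<Sum>u<n. f (b+u))"
  by (induct n) auto

lemma bo_gen: "concat (map (\<lambda>i. map (\<lambda>j. (i,j)) [0..<w]) (rev [0..<m])) =
   map (\<lambda>k. (m - 1 - k div w, k mod w)) [0..<m*w]"
proof (cases "w = 0")
  case True then show ?thesis by simp
next
  case False
  show ?thesis
  proof (induct m)
    case 0 then show ?case by simp
  next
    case (Suc m)
    have up: "[0..<Suc m * w] = [0..<w] @ [w..<w + m*w]"
      by (simp only: mult_Suc) (rule upt_add_eq_append, simp)
    have A: "map (\<lambda>k. (Suc m - 1 - k div w, k mod w)) [0..<w] = map (\<lambda>j. (m,j)) [0..<w]"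
      by (rule map_cong) auto
    have B: "map (\<lambda>k. (Suc m - 1 - k div w, k mod w)) [w..<w + m*w] = map (\<lambda>k. (m - 1 - k div w, k mod w)) [0..<m*w]"
    proof -
      have "map (\<lambda>k. (Suc m - 1 - k div w, k mod w)) [w..<w + m*w] =
            map (\<lambda>u. (Suc m - 1 - (w + u) div w, (w + u) mod w)) [0..<m*w]"
        by (rule map_upt_shift)
      also have "\<dots> = map (\<lambda>k. (m - 1 - k div w, k mod w)) [0..<m*w]"
        using False by (intro map_cong refl) simp
      finally show ?thesis .
    qed
    have "concat (map (\<lambda>i. map (\<lambda>j. (i,j)) [0..<w]) (rev [0..<Suc m])) =
          map (\<lambda>j. (m,j)) [0..<w] @ concat (map (\<lambda>i. map (\<lambda>j. (i,j)) [0..<w]) (rev [0..<m]))"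
      by simp
    also have "\<dots> = map (\<lambda>k. (Suc m - 1 - k div w, k mod w)) [0..<Suc m * w]"
      unfolding up map_append A B Suc ..
    finally show ?case .
  qed
qed

lemma bo_formula: "block_order m = map (\<lambda>k. (m - 1 - k div m, k mod m)) [0..<m*m]"
  unfolding block_order_def by (rule bo_gen)

lemma bo_nth: "k < m * m \<Longrightarrow> block_order m ! k = (m - 1 - k div m, k mod m)"
  by (simp add: bo_formula)

lemma bo_len: "length (block_order m) = m * m"
  by (simp add: bo_formula)

lemma first_ns:
  assumes f: "first_nonstable ns1 L M = Some (a,b)"
  shows "a < length ns1" "b < length ns1" "\<not> stable ns1 L M a b"
    "\<And>a' b'. a' < length ns1 \<Longrightarrow> b' < length ns1 \<Longrightarrow> (a < a' \<or> (a' = a \<and> b' < b)) \<Longrightarrow> stable ns1 L M a' b'"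
proof -
  define m where "m = length ns1"
  obtain i where i: "i < m * m" "(a,b) = block_order m ! i" "\<not> stable ns1 L M a b"
    "\<And>j. j < i \<Longrightarrow> \<not> (\<lambda>(x,y). \<not> stable ns1 L M x y) (block_order m ! j)"
    using f unfolding first_nonstable_def find_Some_iff m_def bo_len by auto
  have m0: "0 < m" using i(1) by (cases m) auto
  have idm: "i div m < m" using i(1) by (simp add: less_mult_imp_div_less)
  have ab: "a = m - 1 - i div m" "b = i mod m" using i(1,2) bo_nth[of i m] by auto
  show "a < length ns1" using ab m0 unfolding m_def by auto
  show "b < length ns1" using ab m0 unfolding m_def by auto
  show "\<not> stable ns1 L M a b" by (rule i(3))
  fix a' b' assume a': "a' < length ns1" and b': "b' < length ns1" and prec: "a < a' \<or> (a' = a \<and> b' < b)"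
  define k where "k = (m - 1 - a') * m + b'"
  have kdiv: "k div m = m - 1 - a'" "k mod m = b'" using b' m0 unfolding k_def m_def by auto
  have "k < (m - 1 - a') * m + m" using b' unfolding k_def m_def by simp
  also have "\<dots> = Suc (m - 1 - a') * m" by simp
  also have "\<dots> \<le> m * m" using a' m0 unfolding m_def by (intro mult_le_mono1) linarith
  finally have km: "k < m * m" .
  have bok: "block_order m ! k = (a', b')" using bo_nth[OF km] kdiv a' unfolding m_def by auto
  have iform: "i = (m - 1 - a) * m + b"
  proof -
    have "m - 1 - a = i div m" using ab idm by auto
    then show ?thesis using ab by simp
  qed
  have "k < i"
  proof (cases "a < a'")
    case True
    have "Suc (m - 1 - a') \<le> m - 1 - a" using True a' unfolding m_def by linarith
    then have "Suc (m - 1 - a') * m \<le> (m - 1 - a) * m" by (rule mult_le_mono1)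
    moreover have "k < Suc (m - 1 - a') * m" using b' unfolding k_def m_def by simp
    ultimately show ?thesis using iform by linarith
  next
    case False
    then have "a' = a" "b' < b" using prec by auto
    then show ?thesis unfolding k_def iform by simp
  qed
  then show "stable ns1 L M a' b'" using i(4)[of k] bok by simp
qed



definition PInv :: "nat \<Rightarrow> (nat \<times> nat) set \<Rightarrow> nat list \<Rightarrow> nat list \<Rightarrow> (nat \<Rightarrow> nat list) \<Rightarrow> bool" where
  "PInv t E ns ns1 P \<longleftrightarrow> ns1 = concat (map P [0..<t]) \<and> (\<forall>i<t. sum_list (P i) = ns ! i) \<and> (\<forall>(i,j)\<in>E. P i = P j)"

lemma strip_eqv_cong: "strip_eqv ns L a b \<Longrightarrow> strip_eqv ns L x a \<longleftrightarrow> strip_eqv ns L x b"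
  unfolding strip_eqv_def by auto

lemma strip_eqv_nth: "strip_eqv ns L a b \<Longrightarrow> ns ! a = ns ! b"
  unfolding strip_eqv_def by auto

lemma step_facts:
  assumes step: "bel_step x y" and x: "x = (ns1, L1, M1)" and y: "y = (ns2, L2, M2)"
  shows "L2 \<subseteq> L1 \<and> (\<exists>S\<in>L1. invertible_mat S \<and> M2 \<in> carrier_mat (sum_list ns1) (sum_list ns1) \<and> S * M2 = M1 * S) \<and>
    (ns2 = ns1 \<or> (\<exists>parts. ns2 = refine ns1 parts \<and> (\<forall>a<length ns1. sum_list (parts a) = ns1 ! a) \<and>
        (\<forall>a b. strip_eqv ns1 L1 a b \<longrightarrow> parts a = parts b)))"
  using step
proof cases
  case (case_I ns L M l r S M' L')
  then show ?thesis using x y by auto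
next
  case (case_II ns L M l r S M' rho ns' L')
  define parts where "parts i = (if strip_eqv ns L l i then filter (\<lambda>x. x \<noteq> 0) [rho, ns ! l - rho]
                         else if strip_eqv ns L r i then filter (\<lambda>x. x \<noteq> 0) [ns ! r - rho, rho]
                         else [ns ! i])" for i
  have e: "ns1 = ns" "L1 = L" "M1 = M" "ns2 = ns'" "L2 = L'" "M2 = M'" using case_II x y by auto
  have "ns' = refine ns parts" using case_II unfolding parts_def by simp
  moreover have "\<forall>a<length ns. sum_list (parts a) = ns ! a"
  proof (intro allI impI)
    fix a assume "a < length ns"
    show "sum_list (parts a) = ns ! a"
    proof (cases "strip_eqv ns L l a")
      case True
      then have "ns ! a = ns ! l" using strip_eqv_nth by metis
      then show ?thesis using True case_II unfolding parts_def by (simp add: sum_list_filter_nz)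
    next
      case F1: False
      show ?thesis
      proof (cases "strip_eqv ns L r a")
        case True
        then have "ns ! a = ns ! r" using strip_eqv_nth by metis
        then show ?thesis using True F1 case_II unfolding parts_def by (simp add: sum_list_filter_nz)
      next
        case False then show ?thesis using F1 unfolding parts_def by simp
      qed
    qed
  qed
  moreover have "\<forall>a b. strip_eqv ns L a b \<longrightarrow> parts a = parts b"
  proof (intro allI impI)
    fix a b assume ab: "strip_eqv ns L a b"
    show "parts a = parts b" unfolding parts_def
      using strip_eqv_cong[OF ab, of l] strip_eqv_cong[OF ab, of r] strip_eqv_nth[OF ab] by simp
  qed
  ultimately show ?thesis using case_II e by blast
next
  case (case_III ns L M l r S M' ws ns' L')
  define parts where "parts i = (if strip_eqv ns L l i then std_part ws else [ns ! i])" for i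
  have e: "ns1 = ns" "L1 = L" "M1 = M" "ns2 = ns'" "L2 = L'" "M2 = M'" using case_III x y by auto
  have "ns' = refine ns parts" using case_III unfolding parts_def by simp
  moreover have "\<forall>a<length ns. sum_list (parts a) = ns ! a"
  proof (intro allI impI)
    fix a assume "a < length ns"
    show "sum_list (parts a) = ns ! a"
    proof (cases "strip_eqv ns L l a")
      case True
      then have "ns ! a = ns ! l" using strip_eqv_nth by metis
      moreover have "sum_list (std_part ws) = ns ! l"
      proof -
        have bw: "blk ns M' l r = weyr_mat ws" and wd: "weyr_data ws" using case_III by blast+
        have "dim_row (blk ns M' l r) = ns ! l" by (simp add: blk_def)
        then show ?thesis using std_part_sum[OF wd] bw by simp
      qed
      ultimately show ?thesis using True unfolding parts_def by simp
    next
      case False then show ?thesis unfolding parts_def by simp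
    qed
  qed
  moreover have "\<forall>a b. strip_eqv ns L a b \<longrightarrow> parts a = parts b"
  proof (intro allI impI)
    fix a b assume ab: "strip_eqv ns L a b"
    show "parts a = parts b" unfolding parts_def
      using strip_eqv_cong[OF ab, of l] strip_eqv_nth[OF ab] by simp
  qed
  ultimately show ?thesis using case_III e by blast
qed



context lmp
begin

context
  fixes ns :: "nat list"
  assumes st: "step_seq t E ns"
begin

lemma lenH: "length ns = t" by (rule len[OF st])

lemma P_sum: "PInv t E ns ns1 P \<Longrightarrow> i \<le> t \<Longrightarrow> (\<Sum>k<i. sum_list (P k)) = off ns i"
proof -
  assume P: "PInv t E ns ns1 P" and i: "i \<le> t"
  have "(\<Sum>k<i. sum_list (P k)) = (\<Sum>k<i. ns ! k)" using P i unfolding PInv_def by (intro sum.cong) auto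
  also have "\<dots> = off ns i" using i lenH by (simp add: off_eq)
  finally show ?thesis .
qed

lemma P_total: "PInv t E ns ns1 P \<Longrightarrow> sum_list ns1 = sum_list ns"
proof -
  assume P: "PInv t E ns ns1 P"
  have "sum_list ns1 = (\<Sum>k<t. sum_list (P k))" using P unfolding PInv_def by (simp add: sum_list_concat_upt)
  also have "\<dots> = off ns t" by (rule P_sum[OF P]) simp
  also have "\<dots> = sum_list ns" unfolding off_def using lenH by simp
  finally show ?thesis .
qed

lemma P_off: "PInv t E ns ns1 P \<Longrightarrow> i < t \<Longrightarrow> u \<le> length (P i) \<Longrightarrow>
   off ns1 (base P i + u) = off ns i + off (P i) u"
  using concat_off[where i=i and t=t and P=P and u=u] P_sum[of ns1 P i] unfolding PInv_def by auto

lemma P_nth: "PInv t E ns ns1 P \<Longrightarrow> i < t \<Longrightarrow> u < length (P i) \<Longrightarrow> ns1 ! (base P i + u) = P i ! u"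
  using concat_nth[where i=i and t=t and u=u and P=P] unfolding PInv_def by auto

lemma P_len: "PInv t E ns ns1 P \<Longrightarrow> length ns1 = base P t"
  unfolding PInv_def by (simp add: length_concat_upt)

lemma P_le: "PInv t E ns ns1 P \<Longrightarrow> i < t \<Longrightarrow> u < length (P i) \<Longrightarrow> off (P i) u + P i ! u \<le> ns ! i"
  using off_le[of u "P i"] unfolding PInv_def by auto

lemma P_idx: "PInv t E ns ns1 P \<Longrightarrow> i < t \<Longrightarrow> u < length (P i) \<Longrightarrow> base P i + u < length ns1"
  using base_mono[of i t P] P_len[of ns1 P] by auto

lemma P_E: "PInv t E ns ns1 P \<Longrightarrow> (i,j) \<in> E \<Longrightarrow> P i = P j"
  unfolding PInv_def by auto

lemma bent_P:
  assumes P: "PInv t E ns ns1 P" and i: "i < t" and j: "j < t" and u: "u < length (P i)" and v: "v < length (P j)"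
    and p: "p < P i ! u" and q: "q < P j ! v"
  shows "X $$ (off ns1 (base P i + u) + p, off ns1 (base P j + v) + q) =
         bent ns X i j (off (P i) u + p) (off (P j) v + q)"
proof -
  have "off (P i) u + p < ns ! i" using P_le[OF P i u] p by linarith
  moreover have "off (P j) v + q < ns ! j" using P_le[OF P j v] q by linarith
  ultimately show ?thesis unfolding bent_def using P_off[OF P i] P_off[OF P j] u v
    by (simp add: add.assoc)
qed

lemma K3:
  assumes P: "PInv t E ns ns1 P" and L1: "L1 \<subseteq> red_alg ns E eqsG" and ij: "(i,j) \<in> E" and u: "u < length (P i)"
  shows "strip_eqv ns1 L1 (base P i + u) (base P j + u)"
proof -
  have i: "i < t" and j: "j < t" using ij E_sub by auto
  have Pij: "P i = P j" using P_E[OF P ij] .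
  have uj: "u < length (P j)" using u Pij by simp
  have nn: "ns ! i = ns ! j" using st_eq[OF st ij] .
  have a: "base P i + u < length ns1" and b: "base P j + u < length ns1"
    using P_idx[OF P i u] P_idx[OF P j uj] by auto
  have n1: "ns1 ! (base P i + u) = ns1 ! (base P j + u)"
    using P_nth[OF P i u] P_nth[OF P j uj] Pij by simp
  have "blk ns1 S (base P i + u) (base P i + u) = blk ns1 S (base P j + u) (base P j + u)" if S: "S \<in> L1" for S
  proof -
    have SR: "S \<in> red_alg ns E eqsG" using S L1 by auto
    then have "blk ns S i i = blk ns S j j" using ij unfolding red_alg_def by auto
    then have bb: "bent ns S i i p q = bent ns S j j p q" for p q using blk_eq_iff[OF nn nn] by auto
    show ?thesis
    proof (rule eq_matI)
      fix p q assume "p < dim_row (blk ns1 S (base P j + u) (base P j + u))" "q < dim_col (blk ns1 S (base P j + u) (base P j + u))"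
      then have p: "p < P i ! u" and q: "q < P i ! u" using P_nth[OF P j uj] Pij by (auto simp: blk_def)
      have "blk ns1 S (base P i + u) (base P i + u) $$ (p,q) = S $$ (off ns1 (base P i + u) + p, off ns1 (base P i + u) + q)"
        using p q P_nth[OF P i u] by (simp add: blk_def)
      also have "\<dots> = bent ns S i i (off (P i) u + p) (off (P i) u + q)" by (rule bent_P[OF P i i u u p q])
      also have "\<dots> = bent ns S j j (off (P j) u + p) (off (P j) u + q)" using bb Pij by simp
      also have "\<dots> = S $$ (off ns1 (base P j + u) + p, off ns1 (base P j + u) + q)"
        by (rule bent_P[OF P j j uj uj, symmetric]) (use p q Pij in auto)
      also have "\<dots> = blk ns1 S (base P j + u) (base P j + u) $$ (p,q)"
        using p q P_nth[OF P j uj] Pij by (simp add: blk_def)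
      finally show "blk ns1 S (base P i + u) (base P i + u) $$ (p,q) = blk ns1 S (base P j + u) (base P j + u) $$ (p,q)" .
    qed (use n1 in \<open>auto simp: blk_def\<close>)
  qed
  then show ?thesis unfolding strip_eqv_def using a b n1 by auto
qed

lemma conj_Mnn:
  assumes S: "S \<in> red_alg ns E eqsG" and inv: "invertible_mat S"
    and M': "M' \<in> carrier_mat (sum_list ns) (sum_list ns)" and X: "X \<in> Mnn ns eqsM" and eq: "S * M' = X * S"
  shows "M' \<in> Mnn ns eqsM"
proof -
  define n where "n = sum_list ns"
  have Sc: "S \<in> carrier_mat n n" using GA_carrier[OF st S] unfolding n_def .
  obtain B where B1: "S * B = 1\<^sub>m (dim_row S)" and B2: "B * S = 1\<^sub>m (dim_row B)"
    using inv unfolding invertible_mat_def inverts_mat_def by blast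
  have Bc: "B \<in> carrier_mat n n"
  proof -
    have "dim_col (S * B) = n" using B1 Sc by simp
    moreover have "dim_col (B * S) = dim_row B" using B2 by simp
    ultimately show ?thesis using Sc by auto
  qed
  have SB: "S * B = 1\<^sub>m n" and BS: "B * S = 1\<^sub>m n" using B1 B2 Sc Bc by auto
  have BR: "B \<in> red_alg ns E eqsG"
    by (rule inv_in_alg[where R = "red_alg ns E eqsG" and n = n and S = S])
       (use GA_carrier[OF st] GA_one[OF st] GA_add[OF st] GA_smult[OF st] GA_mult[OF st] S Bc SB BS in
        \<open>auto simp: n_def\<close>)
  have Xc: "X \<in> carrier_mat n n" using MA_carrier[OF st X] unfolding n_def .
  have Mc: "M' \<in> carrier_mat n n" using M' unfolding n_def .
  have "M' = (B * S) * M'" using BS Mc by simp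
  also have "\<dots> = B * (S * M')" using Bc Sc Mc by simp
  also have "\<dots> = B * (X * S)" using eq by simp
  finally have "M' = B * (X * S)" .
  then show ?thesis using MA_left[OF st BR MA_right[OF st S X]] by simp
qed

lemma refine_ok:
  assumes P: "PInv t E ns ns1 P" and L1: "L1 \<subseteq> red_alg ns E eqsG"
    and sums: "\<forall>a<length ns1. sum_list (parts a) = ns1 ! a"
    and inv: "\<forall>a b. strip_eqv ns1 L1 a b \<longrightarrow> parts a = parts b"
  shows "\<exists>P'. PInv t E ns (refine ns1 parts) P'"
proof -
  define P' where "P' i = concat (map parts [base P i..<base P i + length (P i)])" for i
  have "refine ns1 parts = concat (map parts [0..<base P t])"
    unfolding refine_def P_len[OF P] ..
  also have "\<dots> = concat (map P' [0..<t])" unfolding P'_def by (rule regroup)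
  finally have r: "refine ns1 parts = concat (map P' [0..<t])" .
  have s: "sum_list (P' i) = ns ! i" if i: "i < t" for i
  proof -
    have "sum_list (P' i) = sum_list (map (\<lambda>a. sum_list (parts a)) [base P i..<base P i + length (P i)])"
      unfolding P'_def by (simp add: sum_list_concat' o_def)
    also have "\<dots> = (\<Sum>u<length (P i). sum_list (parts (base P i + u)))" by (rule sum_list_map_upt)
    also have "\<dots> = (\<Sum>u<length (P i). P i ! u)"
      using sums P_idx[OF P i] P_nth[OF P i] by (intro sum.cong) auto
    also have "\<dots> = sum_list (P i)" by (simp add: sum_list_nth_eq)
    also have "\<dots> = ns ! i" using P i unfolding PInv_def by auto
    finally show ?thesis .
  qed
  have e: "P' i = P' j" if ij: "(i,j) \<in> E" for i j
  proof -
    have Pij: "P i = P j" using P_E[OF P ij] .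
    have "P' i = concat (map (\<lambda>u. parts (base P i + u)) [0..<length (P i)])"
      unfolding P'_def map_upt_shift ..
    also have "\<dots> = concat (map (\<lambda>u. parts (base P j + u)) [0..<length (P j)])"
      using inv K3[OF P L1 ij] Pij by (intro arg_cong[where f = concat] map_cong) auto
    also have "\<dots> = P' j" unfolding P'_def map_upt_shift ..
    finally show ?thesis .
  qed
  have "PInv t E ns (refine ns1 parts) P'" unfolding PInv_def using r s e by auto
  then show ?thesis by blast
qed

definition InvT :: "nat list \<times> 'a mat set \<times> 'a mat \<Rightarrow> bool" where
  "InvT x = (case x of (ns1, L1, M1) \<Rightarrow> \<exists>P. PInv t E ns ns1 P \<and> L1 \<subseteq> red_alg ns E eqsG \<and> M1 \<in> Mnn ns eqsM)"

lemma step_inv: assumes step: "bel_step x y" and I: "InvT x" shows "InvT y"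
proof -
  obtain ns1 L1 M1 where x: "x = (ns1, L1, M1)" by (cases x) auto
  obtain ns2 L2 M2 where y: "y = (ns2, L2, M2)" by (cases y) auto
  obtain P where P: "PInv t E ns ns1 P" and L1: "L1 \<subseteq> red_alg ns E eqsG" and M1: "M1 \<in> Mnn ns eqsM"
    using I x unfolding InvT_def by auto
  note f = step_facts[OF step x y]
  have L2: "L2 \<subseteq> red_alg ns E eqsG" using f L1 by auto
  obtain S where S: "S \<in> L1" "invertible_mat S" "M2 \<in> carrier_mat (sum_list ns1) (sum_list ns1)" "S * M2 = M1 * S"
    using f by blast
  have M2: "M2 \<in> Mnn ns eqsM"
    using conj_Mnn[of S M2 M1] S L1 M1 P_total[OF P] by auto
  have "\<exists>P2. PInv t E ns ns2 P2"
  proof (cases "ns2 = ns1")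
    case True then show ?thesis using P by auto
  next
    case False
    then obtain parts where "ns2 = refine ns1 parts" "\<forall>a<length ns1. sum_list (parts a) = ns1 ! a"
      "\<forall>a b. strip_eqv ns1 L1 a b \<longrightarrow> parts a = parts b" using f by blast
    then show ?thesis using refine_ok[OF P L1] by auto
  qed
  then show ?thesis unfolding InvT_def y using L2 M2 by auto
qed

lemma reach_inv:
  assumes r: "bel_step\<^sup>*\<^sup>* (ns, red_alg ns E eqsG, M) y" and M: "M \<in> Mnn ns eqsM"
  shows "InvT y"
  using r
proof (induct rule: rtranclp_induct)
  case base
  define P0 where "P0 i = [ns ! i]" for i
  have "concat (map P0 [0..<t]) = ns"
  proof -
    have "concat (map P0 [0..<t]) = map (\<lambda>i. ns ! i) [0..<t]" unfolding P0_def by (induct t) auto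
    also have "\<dots> = ns" using lenH by (metis map_nth)
    finally show ?thesis .
  qed
  then have "PInv t E ns ns P0" unfolding PInv_def P0_def using st_eq[OF st] by auto
  then show ?case unfolding InvT_def using M by auto
next
  case (step y z) then show ?case using step_inv by blast
qed

end

end



context lmp
begin

lemma concl:
  assumes st: "step_seq t E ns" and I: "InvT ns (ns1, L1, M1)" and f: "first_nonstable ns1 L1 M1 = Some (l, r)"
  shows "\<exists>(i, j)\<in>Nf. off ns i \<le> off ns1 l \<and> off ns1 l + ns1 ! l \<le> off ns i + ns ! i \<and>
                         off ns j \<le> off ns1 r \<and> off ns1 r + ns1 ! r \<le> off ns j + ns ! j"
proof -
  obtain P where P: "PInv t E ns ns1 P" and L1: "L1 \<subseteq> red_alg ns E eqsG" and M1: "M1 \<in> Mnn ns eqsM"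
    using I unfolding InvT_def[OF st] by auto
  note fn = first_ns[OF f]
  have ns1: "ns1 = concat (map P [0..<t])" using P unfolding PInv_def by auto
  obtain L u where L: "L < t" and u: "u < length (P L)" and l: "l = base P L + u"
    using concat_decomp[of l P t] fn(1) ns1 by auto
  obtain R v where R: "R < t" and v: "v < length (P R)" and r: "r = base P R + v"
    using concat_decomp[of r P t] fn(2) ns1 by auto
  have offl: "off ns1 l = off ns L + off (P L) u" using P_off[OF st P L] u l by auto
  have offr: "off ns1 r = off ns R + off (P R) v" using P_off[OF st P R] v r by auto
  have nl: "ns1 ! l = P L ! u" using P_nth[OF st P L u] l by simp
  have nr: "ns1 ! r = P R ! v" using P_nth[OF st P R v] r by simp
  have lel: "off (P L) u + P L ! u \<le> ns ! L" by (rule P_le[OF st P L u])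
  have ler: "off (P R) v + P R ! v \<le> ns ! R" by (rule P_le[OF st P R v])
  show ?thesis
  proof (cases "(L, R) \<in> Nf")
    case True
    show ?thesis
      by (rule bexI[OF _ True]) (use offl offr nl nr lel ler in auto)
  next
    case False
    then have LR: "(L, R) \<in> Nd" using NdNf L R by auto
    have "stable ns1 L1 M1 l r"
      unfolding stable_def
    proof (intro ballI impI)
      fix S M' assume S: "S \<in> L1" and M'c: "M' \<in> carrier_mat (sum_list ns1) (sum_list ns1)"
        and h: "invertible_mat S \<and> S * M' = M1 * S"
      have M': "M' \<in> Mnn ns eqsM"
        using conj_Mnn[OF st, of S M' M1] S L1 M'c h M1 P_total[OF st P] by auto
      show "blk ns1 M' l r = blk ns1 M1 l r"
      proof (rule eq_matI)
        fix p q assume "p < dim_row (blk ns1 M1 l r)" "q < dim_col (blk ns1 M1 l r)"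
        then have p: "p < P L ! u" and q: "q < P R ! v" using nl nr by (auto simp: blk_def)
        define p' where "p' = off (P L) u + p"
        define q' where "q' = off (P R) v + q"
        have p': "p' < ns ! L" using lel p unfolding p'_def by linarith
        have q': "q' < ns ! R" using ler q unfolding q'_def by linarith
        have be: "blk ns1 X l r $$ (p,q) = bent ns X L R p' q'" for X :: "'a mat"
        proof -
          have "blk ns1 X l r $$ (p,q) = X $$ (off ns1 l + p, off ns1 r + q)"
            using p q nl nr by (simp add: blk_def)
          also have "\<dots> = bent ns X L R p' q'" unfolding l r p'_def q'_def by (rule bent_P[OF st P L R u v p q])
          finally show ?thesis .
        qed
        have dep: "bent ns X L R p' q' = (\<Sum>(i, j)\<in>Nf. c (L, R) (i, j) * bent ns X i j p' q')"
          if "X \<in> Mnn ns eqsM" for X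
          using that MA_dep[OF st, of X] LR p' q' by auto
        have terms: "c (L, R) (i, j) * bent ns M' i j p' q' = c (L, R) (i, j) * bent ns M1 i j p' q'"
          if ij: "(i, j) \<in> Nf" for i j
        proof (cases "c (L, R) (i, j) = 0")
          case False
          then have iL: "(i, L) \<in> E" and jR: "(j, R) \<in> E" and ul: "unk_less (i, j) (L, R)"
            using c_shape LR by auto
          have i: "i < t" and j: "j < t" using ij Nf_sub[OF st] by auto
          have Pi: "P i = P L" and Pj: "P j = P R" using P_E[OF st P iL] P_E[OF st P jR] by auto
          have ui: "u < length (P i)" and vj: "v < length (P j)" using u v Pi Pj by auto
          have pi: "p < P i ! u" and qj: "q < P j ! v" using p q Pi Pj by auto
          define a' where "a' = base P i + u"
          define b' where "b' = base P j + v"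
          have a'l: "a' < length ns1" unfolding a'_def by (rule P_idx[OF st P i ui])
          have b'l: "b' < length ns1" unfolding b'_def by (rule P_idx[OF st P j vj])
          have na: "ns1 ! a' = P L ! u" and nb: "ns1 ! b' = P R ! v"
            using P_nth[OF st P i ui] P_nth[OF st P j vj] Pi Pj unfolding a'_def b'_def by auto
          have bx: "bent ns X i j p' q' = blk ns1 X a' b' $$ (p,q)" for X :: "'a mat"
          proof -
            have "bent ns X i j p' q' = X $$ (off ns1 a' + p, off ns1 b' + q)"
              unfolding a'_def b'_def p'_def q'_def using bent_P[OF st P i j ui vj pi qj, of X] Pi Pj by simp
            also have "\<dots> = blk ns1 X a' b' $$ (p,q)" using p q na nb by (simp add: blk_def)
            finally show ?thesis .
          qed
          have prec: "l < a' \<or> (a' = l \<and> b' < r)"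
          proof (cases "L < i")
            case True
            have "base P L + length (P L) \<le> base P i" by (rule base_mono[OF True])
            then show ?thesis using u unfolding l a'_def by auto
          next
            case False
            then have iL': "i = L" and jR': "j < R" using ul unfolding unk_less_def by auto
            have "base P j + length (P j) \<le> base P R" by (rule base_mono[OF jR'])
            then show ?thesis using vj iL' unfolding l r a'_def b'_def by auto
          qed
          have "stable ns1 L1 M1 a' b'" by (rule fn(4)[OF a'l b'l prec])
          then have "blk ns1 M' a' b' = blk ns1 M1 a' b'"
            unfolding stable_def using S M'c h by blast
          then show ?thesis using bx[of M'] bx[of M1] by simp
        qed simp
        have "blk ns1 M' l r $$ (p,q) = (\<Sum>(i, j)\<in>Nf. c (L, R) (i, j) * bent ns M' i j p' q')"
          using be[of M'] dep[OF M'] by simp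
        also have "\<dots> = (\<Sum>(i, j)\<in>Nf. c (L, R) (i, j) * bent ns M1 i j p' q')"
          using terms by (intro sum.cong) auto
        also have "\<dots> = blk ns1 M1 l r $$ (p,q)" using be[of M1] dep[OF M1] by simp
        finally show "blk ns1 M' l r $$ (p,q) = blk ns1 M1 l r $$ (p,q)" .
      qed (auto simp: blk_def)
    qed
    then show ?thesis using fn(3) by contradiction
  qed
qed

end

theorem lemma2p2:
  fixes t :: nat
    and E :: "(nat \<times> nat) set"
    and eqsG eqsM :: "(nat \<Rightarrow> nat \<Rightarrow> 'a::{field,linorder}) set"
    and Nd Nf :: "(nat \<times> nat) set"
    and c :: "nat \<times> nat \<Rightarrow> nat \<times> nat \<Rightarrow> 'a"
  assumes closed: "alg_closed TYPE('a)"
    and equiv: "equiv {0..<t} E"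
    and eqsG: "\<forall>e\<in>eqsG. one_class_pair E t e \<and> (\<forall>i j. e i j \<noteq> 0 \<longrightarrow> i < j)"
    and G_mult: "\<forall>A\<in>red_alg (replicate t 1) E eqsG. \<forall>B\<in>red_alg (replicate t 1) E eqsG.
                   A * B \<in> red_alg (replicate t 1) E eqsG"
    and eqsM: "\<forall>e\<in>eqsM. one_class_pair E t e"
    and GM: "\<forall>A\<in>red_alg (replicate t 1) E eqsG. \<forall>B\<in>Mnn (replicate t 1) eqsM.
                   A * B \<in> Mnn (replicate t 1) eqsM \<and> B * A \<in> Mnn (replicate t 1) eqsM"
    and NdNf: "Nd \<union> Nf = {0..<t} \<times> {0..<t}" "Nd \<inter> Nf = {}"
    and c_shape: "\<forall>(l, r)\<in>Nd. \<forall>i j. c (l, r) (i, j) \<noteq> 0 \<longrightarrow>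
                   (i, j) \<in> Nf \<and> (i, l) \<in> E \<and> (j, r) \<in> E \<and> unk_less (i, j) (l, r)"
    and GJ: "Mnn (replicate t 1) eqsM = {m \<in> carrier_mat t t.
               \<forall>(l, r)\<in>Nd. m $$ (l, r) = (\<Sum>(i, j)\<in>Nf. c (l, r) (i, j) * m $$ (i, j))}"
  shows "(\<forall>ns. step_seq t E ns \<longrightarrow>
           Mnn ns eqsM = {M \<in> carrier_mat (sum_list ns) (sum_list ns).
              \<forall>(l, r)\<in>Nd. \<forall>p < ns ! l. \<forall>q < ns ! r.
                bent ns M l r p q = (\<Sum>(i, j)\<in>Nf. c (l, r) (i, j) * bent ns M i j p q)}) \<and>
         (\<forall>ns M ns1 L1 M1 l r. step_seq t E ns \<longrightarrow> M \<in> Mnn ns eqsM \<longrightarrow>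
           bel_step\<^sup>*\<^sup>* (ns, red_alg ns E eqsG, M) (ns1, L1, M1) \<longrightarrow>
           first_nonstable ns1 L1 M1 = Some (l, r) \<longrightarrow>
           (\<exists>(i, j)\<in>Nf. off ns i \<le> off ns1 l \<and> off ns1 l + ns1 ! l \<le> off ns i + ns ! i \<and>
                         off ns j \<le> off ns1 r \<and> off ns1 r + ns1 ! r \<le> off ns j + ns ! j))"
proof -
  interpret lmp t E eqsG eqsM Nd Nf c
    by (rule lmp.intro) (fact equiv eqsG G_mult GM NdNf c_shape GJ)+
  show ?thesis
  proof (intro conjI allI impI)
    fix ns assume st: "step_seq t E ns"
    show "Mnn ns eqsM = {M \<in> carrier_mat (sum_list ns) (sum_list ns).
              \<forall>(l, r)\<in>Nd. \<forall>p < ns ! l. \<forall>q < ns ! r.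
                bent ns M l r p q = (\<Sum>(i, j)\<in>Nf. c (l, r) (i, j) * bent ns M i j p q)}"
    proof (rule Set.set_eqI)
      fix X :: "'a mat"
      show "X \<in> Mnn ns eqsM \<longleftrightarrow> X \<in> {M \<in> carrier_mat (sum_list ns) (sum_list ns).
              \<forall>(l, r)\<in>Nd. \<forall>p < ns ! l. \<forall>q < ns ! r.
                bent ns M l r p q = (\<Sum>(i, j)\<in>Nf. c (l, r) (i, j) * bent ns M i j p q)}"
        unfolding mem_Collect_eq by (rule MA_dep[OF st])
    qed
  next
    fix ns M ns1 L1 M1 l r
    assume st: "step_seq t E ns" and M: "M \<in> Mnn ns eqsM"
      and reach: "bel_step\<^sup>*\<^sup>* (ns, red_alg ns E eqsG, M) (ns1, L1, M1)"
      and f: "first_nonstable ns1 L1 M1 = Some (l, r)"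
    have "InvT ns (ns1, L1, M1)" by (rule reach_inv[OF st reach M])
    then show "\<exists>(i, j)\<in>Nf. off ns i \<le> off ns1 l \<and> off ns1 l + ns1 ! l \<le> off ns i + ns ! i \<and>
                         off ns j \<le> off ns1 r \<and> off ns1 r + ns1 ! r \<le> off ns j + ns ! j"
      by (rule concl[OF st _ f])
  qed
qed


end
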